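(* Let $n>2$, let $K\subset\mathbb{R}^{n,+}$ be a bounded region with smooth boundary whose closure $\overline K$ lies in $\mathbb{R}^{n,+}$, and let $L\in C^1(\overline K)$ be $Cl_n$-valued. Define, for $y\in\mathbb{R}^{n,+}\setminus\overline K$, $$I(y)=y_n^{n-2}\left(\int_K E(x,y)L(x)\,dx^n-\int_K F(x,y)\hat L(x)\,dx^n\right).$$ Then $I$ is hypermonogenic on $\mathbb{R}^{n,+}\setminus\overline K$, i.e. $MI=0$ there.
   Context: $Cl_n$ is the real Clifford algebra generated by an orthonormal basis $e_1,\dots,e_n$ of $\mathbb{R}^n$ with $e_ie_j+e_je_i=-2\delta_{ij}$; vectors $x=\sum x_je_j$ are viewed in $Cl_n$, a nonzero vector has inverse $x^{-1}=-x/\|x\|^2$, $\|\cdot\|$ is the Euclidean norm, $\mathbb{R}^{n,+}=\{x:x_n>0\}$, and $dx^n$ is Lebesgue measure. $Cl_{n-1}$ is the subalgebra generated by $e_1,\dots,e_{n-1}$; each $A\in Cl_n$ is uniquely $A=B+Ce_n$ with $B,C\in Cl_{n-1}$, and $\hat A:=B-Ce_n$, $Q(A)=C$, $Q'(A)=-e_nQ(A)e_n$. For a vector $y$, $\hat y=y_1e_1+\dots+y_{n-1}e_{n-1}-y_ne_n$; $\hat L(x)=\widehat{L(x)}$. The kernels are $E(x,y)=\frac{(x-y)^{-1}}{\|x-y\|^{n-2}\|x-\hat y\|^{n-2}}$ and $F(x,y)=\frac{(\hat x-y)^{-1}}{\|x-y\|^{n-2}\|\hat x-y\|^{n-2}}$.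 The Dirac-Hodge operator is $Mf=\sum_{j=1}^ne_j\frac{\partial f}{\partial y_j}+\frac{n-2}{y_n}Q'(f)$, and $f$ is (left) hypermonogenic if $Mf=0$. *)

theory Defs
  imports "HOL-Analysis.Analysis"
begin

text \<open>The coordinate index type 'n is a finite linearly ordered type with CARD('n) = n;
  its elements play the role of 1..n, and the largest element plays the role of n.  The Clifford algebra Cl_n is represented by its
  coefficient vectors w.r.t. the blade basis e_A (A a subset of the index set),
  i.e. by real^('n set).\<close>

type_synonym 'n cl = "real ^ ('n set)"

definition lastidx :: "'n::{finite,linorder}" where
  "lastidx = Max UNIV"

definition blade :: "'n set \<Rightarrow> 'n::{finite,linorder} cl" where
  "blade A = (\<chi> C. if C = A then 1 else 0)"

definition cl_e :: "'n::{finite,linorder} \<Rightarrow> 'n cl" where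
  "cl_e i = blade {i}"

text \<open>Sign of e_A e_B = sign A B * e_(A symmetric-difference B), with e_i^2 = -1.\<close>
definition cl_sign :: "'n::{finite,linorder} set \<Rightarrow> 'n set \<Rightarrow> real" where
  "cl_sign A B = (-1) ^ (card {(i,j). i \<in> A \<and> j \<in> B \<and> j < i} + card (A \<inter> B))"

definition cl_mult :: "'n::{finite,linorder} cl \<Rightarrow> 'n cl \<Rightarrow> 'n cl" (infixl "\<odot>" 70) where
  "a \<odot> b = (\<chi> C. \<Sum>A\<in>UNIV. \<Sum>B\<in>UNIV.
      if (A - B) \<union> (B - A) = C then cl_sign A B * (a $ A) * (b $ B) else 0)"

definition cl_vec :: "real ^ ('n::{finite,linorder}) \<Rightarrow> 'n cl" where
  "cl_vec x = (\<Sum>i\<in>UNIV. (x $ i) *\<^sub>R cl_e i)"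

definition cl_vinv :: "real ^ ('n::{finite,linorder}) \<Rightarrow> 'n cl" where
  "cl_vinv x = cl_vec (- (1 / norm x ^ 2) *\<^sub>R x)"

text \<open>A = B + C e_n with B, C in Cl_(n-1); Q(A) = C, hat A = B - C e_n, Q'(A) = - e_n Q(A) e_n.\<close>
definition cl_Q :: "'n::{finite,linorder} cl \<Rightarrow> 'n cl" where
  "cl_Q a = (\<chi> D. if lastidx \<in> D then 0 else a $ (insert lastidx D))"

definition cl_B :: "'n::{finite,linorder} cl \<Rightarrow> 'n cl" where
  "cl_B a = (\<chi> D. if lastidx \<in> D then 0 else a $ D)"

definition cl_hat :: "'n::{finite,linorder} cl \<Rightarrow> 'n cl" where
  "cl_hat a = cl_B a - cl_Q a \<odot> cl_e lastidx"

definition cl_Q' :: "'n::{finite,linorder} cl \<Rightarrow> 'n cl" where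
  "cl_Q' a = - (cl_e lastidx \<odot> cl_Q a \<odot> cl_e lastidx)"

definition vhat :: "real ^ ('n::{finite,linorder}) \<Rightarrow> real ^ ('n::{finite,linorder})" where
  "vhat y = (\<chi> i. if i = lastidx then - (y $ i) else y $ i)"

definition upper_half :: "(real ^ ('n::{finite,linorder})) set" where
  "upper_half = {x. x $ lastidx > 0}"

definition kerE :: "real ^ ('n::{finite,linorder}) \<Rightarrow> real ^ ('n::{finite,linorder}) \<Rightarrow> 'n cl" where
  "kerE x y = (1 / (norm (x - y) ^ (CARD('n) - 2) * norm (x - vhat y) ^ (CARD('n) - 2)))
                *\<^sub>R cl_vinv (x - y)"

definition kerF :: "real ^ ('n::{finite,linorder}) \<Rightarrow> real ^ ('n::{finite,linorder}) \<Rightarrow> 'n cl" where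
  "kerF x y = (1 / (norm (x - y) ^ (CARD('n) - 2) * norm (vhat x - y) ^ (CARD('n) - 2)))
                *\<^sub>R cl_vinv (vhat x - y)"

definition pdiff :: "('n::finite) \<Rightarrow> (real ^ 'n \<Rightarrow> 'b::real_normed_vector) \<Rightarrow> real ^ 'n \<Rightarrow> 'b" where
  "pdiff j f y = vector_derivative (\<lambda>t. f (y + t *\<^sub>R axis j 1)) (at 0)"

definition has_partials_on :: "(real ^ ('n::finite) \<Rightarrow> 'b::real_normed_vector) \<Rightarrow> (real ^ 'n) set \<Rightarrow> bool" where
  "has_partials_on f S \<longleftrightarrow> (\<forall>y\<in>S. \<forall>j. (\<lambda>t. f (y + t *\<^sub>R axis j 1)) differentiable (at 0))"

fun Ck_on :: "nat \<Rightarrow> (real ^ ('n::finite)) set \<Rightarrow> (real ^ 'n \<Rightarrow> 'b::real_normed_vector) \<Rightarrow> bool" where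
  "Ck_on 0 S f = continuous_on S f"
| "Ck_on (Suc k) S f = (continuous_on S f \<and> has_partials_on f S \<and> (\<forall>j. Ck_on k S (pdiff j f)))"

definition smooth_on :: "(real ^ ('n::finite)) set \<Rightarrow> (real ^ 'n \<Rightarrow> real) \<Rightarrow> bool" where
  "smooth_on S f \<longleftrightarrow> (\<forall>k. Ck_on k S f)"

definition smooth_boundary :: "(real ^ ('n::finite)) set \<Rightarrow> bool" where
  "smooth_boundary K \<longleftrightarrow> (\<forall>p\<in>frontier K. \<exists>U \<phi>. open U \<and> p \<in> U \<and> smooth_on U \<phi> \<and>
      (\<exists>j. pdiff j \<phi> p \<noteq> 0) \<and> K \<inter> U = {x\<in>U. \<phi> x < 0})"

definition C1_closure :: "(real ^ ('n::finite)) set \<Rightarrow> (real ^ 'n \<Rightarrow> 'b::real_normed_vector) \<Rightarrow> bool" where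
  "C1_closure K f \<longleftrightarrow> continuous_on (closure K) f \<and> has_partials_on f K \<and>
      (\<forall>j. \<exists>g. continuous_on (closure K) g \<and> (\<forall>x\<in>K. pdiff j f x = g x))"

definition DH :: "(real ^ ('n::{finite,linorder}) \<Rightarrow> 'n cl) \<Rightarrow> real ^ ('n::{finite,linorder}) \<Rightarrow> 'n cl" where
  "DH f y = (\<Sum>j\<in>UNIV. cl_e j \<odot> pdiff j f y)
      + ((real CARD('n) - 2) / (y $ lastidx)) *\<^sub>R cl_Q' (f y)"

definition hypermonogenic_on :: "(real ^ ('n::{finite,linorder})) set \<Rightarrow> (real ^ ('n::{finite,linorder}) \<Rightarrow> 'n cl) \<Rightarrow> bool" where
  "hypermonogenic_on S f \<longleftrightarrow> Ck_on 1 S f \<and> (\<forall>y\<in>S. DH f y = 0)"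

end

theory Submission
  imports Defs
begin

definition sdiff :: "'a set \<Rightarrow> 'a set \<Rightarrow> 'a set" where
  "sdiff A B = (A - B) \<union> (B - A)"

lemma sdiff_eq_iff: "(A - B) \<union> (B - A) = C \<longleftrightarrow> B = sdiff A C"
  unfolding sdiff_def by blast

lemma cl_mult_comp: "(a \<odot> b) $ C = (\<Sum>A\<in>UNIV. cl_sign A (sdiff A C) * a $ A * b $ (sdiff A C))"
proof -
  have "(a \<odot> b) $ C = (\<Sum>A\<in>UNIV. \<Sum>B\<in>UNIV.
      if B = sdiff A C then cl_sign A B * (a $ A) * (b $ B) else 0)"
    unfolding cl_mult_def by (simp add: sdiff_eq_iff)
  also have "\<dots> = (\<Sum>A\<in>UNIV. cl_sign A (sdiff A C) * a $ A * b $ (sdiff A C))"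
    by (simp add: sum.delta')
  finally show ?thesis .
qed

lemma cl_bilinear: "bilinear ((\<odot>) :: 'n::{finite,linorder} cl \<Rightarrow> _)"
  unfolding bilinear_def linear_iff
  by (auto simp: vec_eq_iff cl_mult_comp algebra_simps sum.distrib sum_distrib_left)

lemma cl_bb: "bounded_bilinear ((\<odot>) :: 'n::{finite,linorder} cl \<Rightarrow> _)"
  using cl_bilinear bilinear_conv_bounded_bilinear by blast


lemma sdiff_simps[simp]: "sdiff A (sdiff A B) = B" "sdiff (sdiff A B) B = A" "sdiff A A = {}"
  "sdiff A {} = A" "sdiff {} A = A"
  unfolding sdiff_def by blast+

lemma sdiff_comm: "sdiff A B = sdiff B A" unfolding sdiff_def by blast
lemma sdiff_assoc: "sdiff (sdiff A B) C = sdiff A (sdiff B C)" unfolding sdiff_def by blast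

lemma par_sd:
  assumes "finite P" "finite R"
  shows "(-1::real) ^ card (sdiff P R) = (-1) ^ card P * (-1) ^ card R"
proof -
  have e: "sdiff P R = (P \<union> R) - (P \<inter> R)" unfolding sdiff_def by blast
  have c1: "card (P \<union> R) + card (P \<inter> R) = card P + card R"
    using card_Un_Int[OF assms] by simp
  have c2: "card (sdiff P R) = card (P \<union> R) - card (P \<inter> R)"
    unfolding e using assms by (subst card_Diff_subset) auto
  have c3: "card (P \<inter> R) \<le> card (P \<union> R)" using assms by (intro card_mono) auto
  have "card P + card R = card (sdiff P R) + 2 * card (P \<inter> R)" using c1 c2 c3 by linarith
  then have "(-1::real) ^ (card P + card R) = (-1) ^ card (sdiff P R)"
    by (simp add: power_add power_mult)
  then show ?thesis by (simp add: power_add)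
qed

definition invs :: "'n::{finite,linorder} set \<Rightarrow> 'n set \<Rightarrow> ('n \<times> 'n) set" where
  "invs A B = {(i,j). i \<in> A \<and> j \<in> B \<and> j < i}"

lemma cl_sign_alt: "cl_sign A B = (-1) ^ card (invs A B) * (-1) ^ card (A \<inter> B)"
  unfolding cl_sign_def invs_def by (simp add: power_add)

lemma invs_sd1: "invs (sdiff A B) C = sdiff (invs A C) (invs B C)"
  unfolding invs_def sdiff_def by blast
lemma invs_sd2: "invs A (sdiff B C) = sdiff (invs A B) (invs A C)"
  unfolding invs_def sdiff_def by blast
lemma int_sd1: "sdiff A B \<inter> C = sdiff (A \<inter> C) (B \<inter> C)"
  unfolding sdiff_def by blast
lemma int_sd2: "A \<inter> sdiff B C = sdiff (A \<inter> B) (A \<inter> C)"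
  unfolding sdiff_def by blast

lemma cocycle:
  fixes A B C :: "'n::{finite,linorder} set"
  shows "cl_sign A B * cl_sign (sdiff A B) C = cl_sign A (sdiff B C) * cl_sign B C"
  unfolding cl_sign_alt invs_sd1 invs_sd2 int_sd1 int_sd2
  by (simp add: par_sd)

lemma cl_assoc: "(a \<odot> b) \<odot> c = a \<odot> (b \<odot> (c :: 'n::{finite,linorder} cl))"
  unfolding vec_eq_iff
proof (rule allI)
  fix D :: "'n set"
  have "((a \<odot> b) \<odot> c) $ D = (\<Sum>X\<in>UNIV. \<Sum>A\<in>UNIV.
      cl_sign X (sdiff X D) * cl_sign A (sdiff A X) * a $ A * b $ (sdiff A X) * c $ (sdiff X D))"
    by (simp add: cl_mult_comp sum_distrib_left sum_distrib_right mult_ac)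
  also have "\<dots> = (\<Sum>A\<in>UNIV. \<Sum>X\<in>UNIV.
      cl_sign X (sdiff X D) * cl_sign A (sdiff A X) * a $ A * b $ (sdiff A X) * c $ (sdiff X D))"
    by (rule sum.swap)
  also have "\<dots> = (\<Sum>A\<in>UNIV. \<Sum>B\<in>UNIV.
      cl_sign (sdiff A B) (sdiff (sdiff A B) D) * cl_sign A B * a $ A * b $ B * c $ (sdiff (sdiff A B) D))"
  proof (rule sum.cong[OF refl])
    fix A :: "'n set"
    show "(\<Sum>X\<in>UNIV. cl_sign X (sdiff X D) * cl_sign A (sdiff A X) * a $ A * b $ (sdiff A X) * c $ (sdiff X D))
      = (\<Sum>B\<in>UNIV. cl_sign (sdiff A B) (sdiff (sdiff A B) D) * cl_sign A B * a $ A * b $ B * c $ (sdiff (sdiff A B) D))"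
      by (rule sum.reindex_bij_witness[where i="sdiff A" and j="sdiff A"]) auto
  qed
  also have "\<dots> = (\<Sum>A\<in>UNIV. \<Sum>B\<in>UNIV.
      cl_sign A (sdiff A D) * cl_sign B (sdiff B (sdiff A D)) * a $ A * b $ B * c $ (sdiff B (sdiff A D)))"
  proof (intro sum.cong refl)
    fix A B :: "'n set"
    have e1: "sdiff (sdiff A B) D = sdiff B (sdiff A D)"
      unfolding sdiff_def by blast
    have e2: "sdiff A D = sdiff B (sdiff B (sdiff A D))" by simp
    have "cl_sign A B * cl_sign (sdiff A B) (sdiff B (sdiff A D))
        = cl_sign A (sdiff B (sdiff B (sdiff A D))) * cl_sign B (sdiff B (sdiff A D))"
      by (rule cocycle)
    then show "cl_sign (sdiff A B) (sdiff (sdiff A B) D) * cl_sign A B * a $ A * b $ B * c $ (sdiff (sdiff A B) D) =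
      cl_sign A (sdiff A D) * cl_sign B (sdiff B (sdiff A D)) * a $ A * b $ B * c $ (sdiff B (sdiff A D))"
      unfolding e1 by (simp add: mult_ac)
  qed
  also have "\<dots> = (a \<odot> (b \<odot> c)) $ D"
    by (simp add: cl_mult_comp sum_distrib_left sum_distrib_right mult_ac)
  finally show "((a \<odot> b) \<odot> c) $ D = (a \<odot> (b \<odot> c)) $ D" .
qed

interpretation clm: bounded_bilinear "(\<odot>) :: 'n::{finite,linorder} cl \<Rightarrow> _"
  by (rule cl_bb)


abbreviation cl1 :: "'n::{finite,linorder} cl" where "cl1 \<equiv> blade {}"

lemma blade_comp: "blade A $ C = (if C = A then 1 else 0)"
  unfolding blade_def by simp

lemma cl_sign_empty[simp]: "cl_sign {} B = 1" "cl_sign A {} = 1"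
  unfolding cl_sign_def by simp_all

lemma cl_one_left[simp]: "cl1 \<odot> a = a"
  unfolding vec_eq_iff cl_mult_comp blade_comp by (simp add: if_distrib if_distribR sum.delta cong: if_cong)

lemma cl_one_right[simp]: "a \<odot> cl1 = a"
proof -
  have "sdiff A C = {} \<longleftrightarrow> A = C" for A C :: "'a set" unfolding sdiff_def by blast
  then show ?thesis
    unfolding vec_eq_iff cl_mult_comp blade_comp by (simp add: if_distrib if_distribR sum.delta' cong: if_cong)
qed

lemma cl_vec_comp: "cl_vec p $ A = (\<Sum>i\<in>UNIV. if A = {i} then p $ i else 0)"
  unfolding cl_vec_def cl_e_def blade_def by (simp add: if_distrib cong: if_cong)

lemma cl_vec_linear: "bounded_linear (cl_vec :: real ^ 'n::{finite,linorder} \<Rightarrow> 'n cl)"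
proof -
  have "linear (cl_vec :: real ^ 'n::{finite,linorder} \<Rightarrow> 'n cl)"
    unfolding linear_iff cl_vec_def by (simp add: scaleR_add_left sum.distrib scaleR_sum_right)
  then show ?thesis using linear_conv_bounded_linear by blast
qed


lemma sing_sum:
  fixes f :: "'a::finite \<Rightarrow> real"
  assumes "A = {k0}"
  shows "(\<Sum>k\<in>UNIV. if A = {k} then f k else 0) = f k0"
proof -
  have e: "(\<lambda>k. if A = {k} then f k else 0) = (\<lambda>k. if k0 = k then f k else 0)" using assms by auto
  show ?thesis unfolding e by simp
qed

lemma cl_e_vec: "cl_e i = cl_vec (axis i 1)"
  unfolding vec_eq_iff cl_vec_comp cl_e_def blade_comp
proof (rule allI)
  fix A :: "'a set"
  show "(if A = {i} then 1 else 0) = (\<Sum>ia\<in>UNIV. if A = {ia} then axis i 1 $ ia else 0)"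
  proof (cases "\<exists>k. A = {k}")
    case True
    then obtain k where k: "A = {k}" by blast
    show ?thesis unfolding sing_sum[OF k] using k by (auto simp: axis_def)
  next
    case False
    then show ?thesis by auto
  qed
qed

lemma sdiff_eq_iff2: "sdiff A C = B \<longleftrightarrow> C = sdiff A B"
  unfolding sdiff_def by blast

lemma blade_mult: "blade A \<odot> blade B = cl_sign A B *\<^sub>R blade (sdiff A B)"
  unfolding vec_eq_iff
proof
  fix C
  have "(blade A \<odot> blade B) $ C = (\<Sum>X\<in>UNIV. cl_sign X (sdiff X C) * (if X = A then 1 else 0) * (if sdiff X C = B then 1 else 0))"
    unfolding cl_mult_comp blade_comp by (simp add: eq_commute)
  also have "\<dots> = (\<Sum>X\<in>UNIV. if X = A then cl_sign X (sdiff X C) * (if sdiff X C = B then 1 else 0) else 0)"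
    by (intro sum.cong refl) auto
  also have "\<dots> = cl_sign A (sdiff A C) * (if sdiff A C = B then 1 else 0)"
    by (simp only: sum.delta finite UNIV_I if_True)
  finally have e: "(blade A \<odot> blade B) $ C = cl_sign A (sdiff A C) * (if sdiff A C = B then 1 else 0)" .
  show "(blade A \<odot> blade B) $ C = (cl_sign A B *\<^sub>R blade (sdiff A B)) $ C"
  proof (cases "C = sdiff A B")
    case True
    then have "sdiff A C = B" by simp
    with e True show ?thesis by (simp add: blade_comp)
  next
    case False
    then have "sdiff A C \<noteq> B" using sdiff_eq_iff2 by metis
    with e False show ?thesis by (simp add: blade_comp)
  qed
qed

lemma cl_vec_sum: "cl_vec p = (\<Sum>i\<in>UNIV. p $ i *\<^sub>R cl_e i)"
  by (simp add: cl_vec_def)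

lemma vp_comp: "(cl_vec p \<odot> cl_vec q) $ C =
   (\<Sum>i\<in>UNIV. \<Sum>j\<in>UNIV. if sdiff {i} {j} = C then cl_sign {i} {j} * p$i * q$j else 0)"
proof -
  have "cl_vec p \<odot> cl_vec q = (\<Sum>i\<in>UNIV. \<Sum>j\<in>UNIV. (p$i * q$j * cl_sign {i} {j}) *\<^sub>R blade (sdiff {i} {j}))"
    unfolding cl_vec_sum clm.sum_left clm.sum_right clm.scaleR_left clm.scaleR_right cl_e_def blade_mult
    by (simp add: scaleR_sum_right mult_ac) (subst sum.swap, simp add: mult_ac)
  then show ?thesis by (simp add: blade_comp if_distrib mult_ac cong: if_cong) (intro sum.cong refl, auto)
qed

lemma sign_single: "cl_sign {i} {j} = (if i = j then -1 else if j < i then -1 else (1::real))"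
proof -
  have a: "{(a,b). a\<in>{i} \<and> b\<in>{j} \<and> b<a} = (if j<i then {(i,j)} else {})" by auto
  have b: "{i}\<inter>{j} = (if i=j then {i} else {})" by auto
  show ?thesis unfolding cl_sign_def a b by auto
qed

lemma sdiff_single: "i \<noteq> j \<Longrightarrow> sdiff {i} {j} = {i,j}" "sdiff {i} {i} = {}"
  unfolding sdiff_def by auto

lemma vp_comp2: "(cl_vec p \<odot> cl_vec q) $ C = (if C = {} then -(p \<bullet> q) else 0) +
   (\<Sum>i\<in>UNIV. \<Sum>j\<in>UNIV. if i < j \<and> C = {i,j} then p$i * q$j - p$j * q$i else 0)"
proof -
  define f where "f i j = (if sdiff {i} {j} = C then cl_sign {i} {j} * p$i * q$j else 0)" for i j
  have split: "f i j = (if i = j then f i j else 0) + (if i < j then f i j else 0) + (if j < i then f i j else 0)" for i j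
    by (cases i j rule: linorder_cases) auto
  have "(cl_vec p \<odot> cl_vec q) $ C = (\<Sum>i\<in>UNIV. \<Sum>j\<in>UNIV. f i j)"
    unfolding vp_comp f_def ..
  also have "\<dots> = (\<Sum>i\<in>UNIV. \<Sum>j\<in>UNIV. if i = j then f i j else 0) + (\<Sum>i\<in>UNIV. \<Sum>j\<in>UNIV. if i < j then f i j else 0)
     + (\<Sum>i\<in>UNIV. \<Sum>j\<in>UNIV. if j < i then f i j else 0)"
    by (subst split) (simp add: sum.distrib)
  also have "(\<Sum>i\<in>UNIV. \<Sum>j\<in>UNIV. if j < i then f i j else 0) = (\<Sum>j\<in>UNIV. \<Sum>i\<in>UNIV. if j < i then f i j else 0)"
    by (rule sum.swap)
  also have "(\<Sum>i\<in>UNIV. \<Sum>j\<in>UNIV. if i = j then f i j else 0) = (\<Sum>i\<in>UNIV. f i i)"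
    by (simp add: sum.delta)
  also have "\<dots> = (if C = {} then -(p \<bullet> q) else 0)"
    by (auto simp: f_def sdiff_single sign_single inner_vec_def sum_negf)
  finally have "(cl_vec p \<odot> cl_vec q) $ C = (if C = {} then -(p \<bullet> q) else 0) +
     (\<Sum>i\<in>UNIV. \<Sum>j\<in>UNIV. (if i < j then f i j else 0) + (if i < j then f j i else 0))"
    by (simp add: sum.distrib)
  also have "(\<Sum>i\<in>UNIV. \<Sum>j\<in>UNIV. (if i < j then f i j else 0) + (if i < j then f j i else 0)) =
     (\<Sum>i\<in>UNIV. \<Sum>j\<in>UNIV. if i < j \<and> C = {i,j} then p$i * q$j - p$j * q$i else 0)"
    by (intro sum.cong refl) (auto simp: f_def sdiff_single sign_single insert_commute)
  finally show ?thesis .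
qed

lemma vp_sq: "cl_vec p \<odot> cl_vec p = (-(p \<bullet> p)) *\<^sub>R cl1"
proof -
  have aux: "(a::real) * b - b * a = 0" for a b by simp
  show ?thesis unfolding vec_eq_iff vp_comp2
    apply (simp add: blade_comp)
    apply (intro allI impI sum.neutral ballI)
    by (simp add: mult.commute)
qed

lemma vp_eq:
  assumes "p \<bullet> q = p' \<bullet> q'" "\<And>i j. i < j \<Longrightarrow> p$i * q$j - p$j * q$i = p'$i * q'$j - p'$j * q'$i"
  shows "cl_vec p \<odot> cl_vec q = cl_vec p' \<odot> cl_vec q'"
  unfolding vec_eq_iff vp_comp2
  apply (rule allI)
  apply (rule arg_cong2[where f=plus])
  using assms(1) apply simp
  apply (intro sum.cong refl)
  using assms(2) by auto

lemma lastidx_max: "i \<le> (lastidx :: 'n::{finite,linorder})"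
  unfolding lastidx_def by simp

lemma mult_blade_right: "(x \<odot> blade B) $ D = cl_sign (sdiff D B) B * x $ (sdiff D B)"
proof -
  have "(x \<odot> blade B) $ D = (\<Sum>A\<in>UNIV. if A = sdiff D B then cl_sign A (sdiff A D) * x $ A else 0)"
    unfolding cl_mult_comp blade_comp
  proof (intro sum.cong refl)
    fix A
    show "cl_sign A (sdiff A D) * x $ A * (if sdiff A D = B then 1 else 0) =
         (if A = sdiff D B then cl_sign A (sdiff A D) * x $ A else 0)"
    proof (cases "A = sdiff D B")
      case True
      then have "sdiff A D = B" unfolding sdiff_def by blast
      then show ?thesis using True by simp
    next
      case False
      then have "sdiff A D \<noteq> B" unfolding sdiff_def by blast
      then show ?thesis using False by simp
    qed
  qed
  also have "\<dots> = cl_sign (sdiff D B) B * x $ (sdiff D B)"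
  proof -
    have "sdiff (sdiff D B) D = B" unfolding sdiff_def by blast
    then show ?thesis by (simp add: sum.delta)
  qed
  finally show ?thesis .
qed

lemma Qe_comp: "(cl_Q a \<odot> cl_e lastidx) $ D = (if lastidx \<in> D then a $ D else 0)"
proof (cases "lastidx \<in> D")
  case True
  have s: "sdiff D {lastidx} = D - {lastidx}" using True unfolding sdiff_def by auto
  have c: "cl_sign (D - {lastidx}) {lastidx} = 1"
  proof -
    have e: "{(i, j). i \<in> D - {lastidx} \<and> j \<in> {lastidx} \<and> j < i} = {}"
      using lastidx_max by (auto simp: not_less)
    have e2: "(D - {lastidx}) \<inter> {lastidx} = {}" by auto
    show ?thesis unfolding cl_sign_def e e2 by simp
  qed
  show ?thesis unfolding cl_e_def mult_blade_right s c using True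
    by (simp add: cl_Q_def insert_absorb)
next
  case False
  have s: "sdiff D {lastidx} = insert lastidx D" using False unfolding sdiff_def by auto
  show ?thesis unfolding cl_e_def mult_blade_right s using False by (simp add: cl_Q_def)
qed

lemma hat_comp: "cl_hat a $ D = (if lastidx \<in> D then - (a $ D) else a $ D)"
  unfolding cl_hat_def using Qe_comp[of a D] by (simp add: cl_B_def)

lemma Qe_eq: "cl_Q a \<odot> cl_e lastidx = (1/2) *\<^sub>R (a - cl_hat a)"
  unfolding vec_eq_iff Qe_comp by (auto simp: hat_comp)

lemma hat_hat[simp]: "cl_hat (cl_hat a) = a"
  unfolding vec_eq_iff hat_comp by auto

lemma hat_linear: "bounded_linear (cl_hat :: 'n::{finite,linorder} cl \<Rightarrow> _)"
proof -
  have "linear (cl_hat :: 'n::{finite,linorder} cl \<Rightarrow> _)"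
    unfolding linear_iff vec_eq_iff by (auto simp: hat_comp algebra_simps)
  then show ?thesis using linear_conv_bounded_linear by blast
qed

lemma eps_sd: "(-1::real) ^ card (sdiff A C \<inter> {lastidx :: 'n::{finite,linorder}}) =
   (-1) ^ card (A \<inter> {lastidx}) * (-1) ^ card (C \<inter> {lastidx})"
  unfolding int_sd1 by (rule par_sd) auto

lemma hat_comp2: "cl_hat a $ D = (-1) ^ card (D \<inter> {lastidx}) * a $ D"
  unfolding hat_comp by (cases "lastidx \<in> D") (auto simp: Int_insert_right)

lemma hat_mult: "cl_hat (a \<odot> b) = cl_hat a \<odot> cl_hat b"
  unfolding vec_eq_iff
proof
  fix D :: "'a set"
  have e: "(-1::real) ^ card (D \<inter> {lastidx}) = (-1) ^ card (A \<inter> {lastidx}) * (-1) ^ card (sdiff A D \<inter> {lastidx})" for A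
    using eps_sd[of A "sdiff A D"] by simp
  show "cl_hat (a \<odot> b) $ D = (cl_hat a \<odot> cl_hat b) $ D"
    unfolding hat_comp2 cl_mult_comp sum_distrib_left
    by (intro sum.cong refl) (simp add: e mult_ac)
qed

lemma hat_vec: "cl_hat (cl_vec p) = cl_vec (vhat p)"
  unfolding vec_eq_iff
proof
  fix D :: "'a set"
  show "cl_hat (cl_vec p) $ D = cl_vec (vhat p) $ D"
  proof (cases "\<exists>k. D = {k}")
    case True
    then obtain k where k: "D = {k}" by blast
    show ?thesis unfolding hat_comp cl_vec_comp sing_sum[OF k] using k by (auto simp: vhat_def)
  next
    case False
    then show ?thesis unfolding hat_comp cl_vec_comp by auto
  qed
qed

lemma Q'_eq: "cl_Q' a = - ((1/2) *\<^sub>R (cl_e lastidx \<odot> (a - cl_hat a)))"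
  unfolding cl_Q'_def cl_assoc Qe_eq clm.scaleR_right ..

lemma en_Q': "cl_e lastidx \<odot> a + cl_Q' a = (1/2) *\<^sub>R (cl_e lastidx \<odot> (a + cl_hat a))"
  unfolding Q'_eq clm.diff_right clm.add_right by (simp add: algebra_simps)

lemma Q'_linear: "bounded_linear (cl_Q' :: 'n::{finite,linorder} cl \<Rightarrow> _)"
proof -
  interpret h: bounded_linear "cl_hat :: 'n::{finite,linorder} cl \<Rightarrow> _" by (rule hat_linear)
  have "linear (cl_Q' :: 'n::{finite,linorder} cl \<Rightarrow> _)"
    unfolding linear_iff Q'_eq by (simp add: h.add h.scaleR h.diff clm.add_right clm.diff_right clm.scaleR_right algebra_simps)
  then show ?thesis using linear_conv_bounded_linear by blast
qed

lemma inner_split: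
  fixes p q :: "real ^ 'n::{finite,linorder}"
  shows "p \<bullet> q = p$lastidx * q$lastidx + (\<Sum>i\<in>UNIV - {lastidx}. p$i * q$i)"
  unfolding inner_vec_def by (simp add: sum.remove[of UNIV lastidx])

lemma clv_add: "cl_vec (p + q) = cl_vec p + cl_vec q"
  unfolding cl_vec_def by (simp add: scaleR_add_left sum.distrib)
lemma clv_diff: "cl_vec (p - q) = cl_vec p - cl_vec q"
  unfolding cl_vec_def by (simp add: scaleR_diff_left sum_subtractf)
lemma clv_scaleR: "cl_vec (c *\<^sub>R p) = c *\<^sub>R cl_vec p"
  unfolding cl_vec_def by (simp add: scaleR_sum_right)
lemma clv_minus: "cl_vec (- p) = - cl_vec p"
  unfolding cl_vec_def by (simp add: sum_negf)

lemma alg1: fixes R S wn vn Z t :: real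
  assumes "R = wn*wn + Z" "S = vn * vn+Z" "R \<noteq> 0" "S \<noteq> 0" "vn + wn = 2*t"
  shows "wn/R + vn/S = 2*t/S * (1/R) * (vn*wn + Z)"
proof -
  have t: "2*t = vn+wn" using assms by simp
  have "wn/R + vn/S = (wn*S + vn*R)/(R*S)" using assms(3,4) by (simp add: field_simps)
  also have "wn*S + vn*R = (vn+wn)*(vn*wn+Z)" unfolding assms(1,2) by algebra
  finally show ?thesis unfolding t by simp
qed
lemma alg2: fixes R S wn vn Z t wi :: real
  assumes "R = wn*wn + Z" "S = vn * vn+Z" "R \<noteq> 0" "S \<noteq> 0" "vn + wn = 2*t"
  shows "-(wi/R - wi/S) = 2*t/S * wi * (wn/R) - 2*t/S * vn * (wi/R)"
proof -
  have t: "2*t = vn+wn" using assms by simp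
  have "-(wi/R - wi/S) = (wi*(R - S))/(R*S)" using assms(3,4) by (simp add: field_simps)
  also have "wi*(R - S) = (vn+wn)*wi*(wn - vn)" unfolding assms(1,2) by algebra
  finally have l: "-(wi/R - wi/S) = (vn+wn)*wi*(wn - vn)/(R*S)" .
  have r: "2*t/S * wi * (wn/R) - 2*t/S * vn * (wi/R) = (vn+wn)*wi*(wn - vn)/(R*S)"
  proof -
    have "2*t/S * wi * (wn/R) - 2*t/S * vn * (wi/R) = (2*t*wi*wn - 2*t * vn*wi)/(R*S)"
      by (simp add: field_simps diff_divide_distrib)
    also have "2*t*wi*wn - 2*t * vn*wi = (vn+wn)*wi*(wn - vn)"
      unfolding mult.assoc[symmetric] t[symmetric] by algebra
    finally show ?thesis .
  qed
  show ?thesis unfolding l r ..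
qed

lemma vec_e: "cl_e lastidx = cl_vec (axis lastidx 1)" by (rule cl_e_vec)

context
  fixes w v :: "real ^ 'n::{finite,linorder}" and t :: real
  assumes hv: "\<And>i. i \<noteq> lastidx \<Longrightarrow> v$i = w$i"
    and ht: "v$lastidx + w$lastidx = 2*t"
    and hR: "w \<bullet> w \<noteq> 0" and hS: "v \<bullet> v \<noteq> 0"
begin

definition "Z = (\<Sum>i\<in>UNIV - {lastidx}. w$i * w$i)"

lemma ww: "w \<bullet> w = w$lastidx * w$lastidx + Z"
  unfolding Z_def by (rule inner_split)
lemma vv: "v \<bullet> v = v$lastidx * v$lastidx + Z"
  unfolding Z_def inner_split[of v v] by (simp, intro sum.cong refl) (simp add: hv)
lemma vw: "v \<bullet> w = v$lastidx * w$lastidx + Z"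
  unfolding Z_def inner_split[of v w] by (simp, intro sum.cong refl) (simp add: hv)
lemma wv: "w \<bullet> v = v$lastidx * w$lastidx + Z"
  using vw by (simp add: inner_commute)

lemma vp1: "cl_e lastidx \<odot> (cl_vec ((1/(w\<bullet>w)) *\<^sub>R w) - cl_hat (cl_vec ((1/(v\<bullet>v)) *\<^sub>R v)))
   = (2*t) *\<^sub>R (cl_vec ((1/(v\<bullet>v)) *\<^sub>R v) \<odot> cl_vec ((1/(w\<bullet>w)) *\<^sub>R w))"
proof -
  have "cl_e lastidx \<odot> (cl_vec ((1/(w\<bullet>w)) *\<^sub>R w) - cl_hat (cl_vec ((1/(v\<bullet>v)) *\<^sub>R v)))
     = cl_vec (axis lastidx 1) \<odot> cl_vec ((1/(w\<bullet>w)) *\<^sub>R w - vhat ((1/(v\<bullet>v)) *\<^sub>R v))"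
    unfolding vec_e hat_vec by (simp add: clv_diff)
  also have "\<dots> = cl_vec (((2*t)/(v\<bullet>v)) *\<^sub>R v) \<odot> cl_vec ((1/(w\<bullet>w)) *\<^sub>R w)"
  proof (rule vp_eq)
    show "axis lastidx 1 \<bullet> ((1/(w\<bullet>w)) *\<^sub>R w - vhat ((1/(v\<bullet>v)) *\<^sub>R v)) =
      ((2*t)/(v\<bullet>v)) *\<^sub>R v \<bullet> (1/(w\<bullet>w)) *\<^sub>R w"
      unfolding inner_axis' using alg1[OF ww vv hR hS ht] by (simp add: vhat_def vw mult.commute)
    fix i j :: 'n assume "i < j"
    show "axis lastidx 1 $ i * ((1/(w\<bullet>w)) *\<^sub>R w - vhat ((1/(v\<bullet>v)) *\<^sub>R v)) $ j -
       axis lastidx 1 $ j * ((1/(w\<bullet>w)) *\<^sub>R w - vhat ((1/(v\<bullet>v)) *\<^sub>R v)) $ i =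
       (((2*t)/(v\<bullet>v)) *\<^sub>R v) $ i * ((1/(w\<bullet>w)) *\<^sub>R w) $ j - (((2*t)/(v\<bullet>v)) *\<^sub>R v) $ j * ((1/(w\<bullet>w)) *\<^sub>R w) $ i"
    proof -
      have i: "i \<noteq> lastidx" using \<open>i < j\<close> lastidx_max[of j] by auto
      show ?thesis
      proof (cases "j = lastidx")
        case True
        show ?thesis using i True hv[OF i] alg2[OF ww vv hR hS ht, of "w$i"]
          by (simp add: vhat_def axis_def)
      next
        case False
        show ?thesis using i False hv[OF i] hv[OF False]
          by (simp add: vhat_def axis_def)
      qed
    qed
  qed
  also have "\<dots> = (2*t) *\<^sub>R (cl_vec ((1/(v\<bullet>v)) *\<^sub>R v) \<odot> cl_vec ((1/(w\<bullet>w)) *\<^sub>R w))"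
    by (simp add: clv_scaleR clm.scaleR_left)
  finally show ?thesis .
qed

lemma vp2: "cl_e lastidx \<odot> (cl_hat (cl_vec ((1/(w\<bullet>w)) *\<^sub>R w)) - cl_vec ((1/(v\<bullet>v)) *\<^sub>R v))
   = (-(2*t)) *\<^sub>R (cl_vec ((1/(w\<bullet>w)) *\<^sub>R w) \<odot> cl_vec ((1/(v\<bullet>v)) *\<^sub>R v))"
proof -
  have "cl_e lastidx \<odot> (cl_hat (cl_vec ((1/(w\<bullet>w)) *\<^sub>R w)) - cl_vec ((1/(v\<bullet>v)) *\<^sub>R v))
     = cl_vec (axis lastidx 1) \<odot> cl_vec (vhat ((1/(w\<bullet>w)) *\<^sub>R w) - (1/(v\<bullet>v)) *\<^sub>R v)"
    unfolding vec_e hat_vec by (simp add: clv_diff)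
  also have "\<dots> = cl_vec ((-(2*t)/(w\<bullet>w)) *\<^sub>R w) \<odot> cl_vec ((1/(v\<bullet>v)) *\<^sub>R v)"
  proof (rule vp_eq)
    show "axis lastidx 1 \<bullet> (vhat ((1/(w\<bullet>w)) *\<^sub>R w) - (1/(v\<bullet>v)) *\<^sub>R v) =
      (-(2*t)/(w\<bullet>w)) *\<^sub>R w \<bullet> (1/(v\<bullet>v)) *\<^sub>R v"
      unfolding inner_axis' using alg1[OF ww vv hR hS ht] by (simp add: vhat_def wv mult.commute)
    fix i j :: 'n assume "i < j"
    show "axis lastidx 1 $ i * (vhat ((1/(w\<bullet>w)) *\<^sub>R w) - (1/(v\<bullet>v)) *\<^sub>R v) $ j -
       axis lastidx 1 $ j * (vhat ((1/(w\<bullet>w)) *\<^sub>R w) - (1/(v\<bullet>v)) *\<^sub>R v) $ i =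
       ((-(2*t)/(w\<bullet>w)) *\<^sub>R w) $ i * ((1/(v\<bullet>v)) *\<^sub>R v) $ j - ((-(2*t)/(w\<bullet>w)) *\<^sub>R w) $ j * ((1/(v\<bullet>v)) *\<^sub>R v) $ i"
    proof -
      have i: "i \<noteq> lastidx" using \<open>i < j\<close> lastidx_max[of j] by auto
      show ?thesis
      proof (cases "j = lastidx")
        case True
        show ?thesis using i True hv[OF i] alg2[OF ww vv hR hS ht, of "w$i"]
          by (simp add: vhat_def axis_def field_simps)
      next
        case False
        show ?thesis using i False hv[OF i] hv[OF False]
          by (simp add: vhat_def axis_def)
      qed
    qed
  qed
  also have "\<dots> = (-(2*t)) *\<^sub>R (cl_vec ((1/(w\<bullet>w)) *\<^sub>R w) \<odot> cl_vec ((1/(v\<bullet>v)) *\<^sub>R v))"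
    by (simp add: clv_scaleR clv_minus clm.scaleR_left clm.minus_left)
  finally show ?thesis .
qed

lemma sq_a: "cl_vec ((1/(w\<bullet>w)) *\<^sub>R w) \<odot> cl_vec ((1/(w\<bullet>w)) *\<^sub>R w) = (-(1/(w\<bullet>w))) *\<^sub>R cl1"
  unfolding vp_sq using hR by (simp add: power2_eq_square)
lemma sq_b: "cl_vec ((1/(v\<bullet>v)) *\<^sub>R v) \<odot> cl_vec ((1/(v\<bullet>v)) *\<^sub>R v) = (-(1/(v\<bullet>v))) *\<^sub>R cl1"
  unfolding vp_sq using hS by (simp add: power2_eq_square)

end

lemma hat_diff: "cl_hat (x - y) = cl_hat x - cl_hat y"
  using bounded_linear.linear[OF hat_linear] by (rule linear_diff)
lemma hat_add: "cl_hat (x + y) = cl_hat x + cl_hat y"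
  using bounded_linear.linear[OF hat_linear] by (rule linear_add)
lemma hat_scaleR: "cl_hat (c *\<^sub>R x) = c *\<^sub>R cl_hat x"
  using bounded_linear.linear[OF hat_linear] by (rule linear_scale)

lemma core_abstract:
  fixes a b A :: "'n::{finite,linorder} cl"
  assumes h1: "cl_e lastidx \<odot> (a - cl_hat b) = (2*t) *\<^sub>R (b \<odot> a)"
    and h2: "cl_e lastidx \<odot> (cl_hat a - b) = (-(2*t)) *\<^sub>R (a \<odot> b)"
    and h3: "a \<odot> a = (-(1/R)) *\<^sub>R cl1" and h4: "b \<odot> b = (-(1/S)) *\<^sub>R cl1"
  shows "cl_e lastidx \<odot> (a \<odot> A - b \<odot> cl_hat A) + cl_Q' (a \<odot> A - b \<odot> cl_hat A)
     - t *\<^sub>R ((a + b) \<odot> (a \<odot> A - b \<odot> cl_hat A)) - (t/R) *\<^sub>R A + (t/S) *\<^sub>R cl_hat A = 0"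
proof -
  let ?U = "a \<odot> A - b \<odot> cl_hat A"
  have hU: "cl_hat ?U = cl_hat a \<odot> cl_hat A - cl_hat b \<odot> A"
    by (simp add: hat_diff hat_mult)
  have "?U + cl_hat ?U = (a - cl_hat b) \<odot> A + (cl_hat a - b) \<odot> cl_hat A"
    unfolding hU by (simp add: clm.diff_left algebra_simps)
  then have "cl_e lastidx \<odot> (?U + cl_hat ?U) = (cl_e lastidx \<odot> (a - cl_hat b)) \<odot> A + (cl_e lastidx \<odot> (cl_hat a - b)) \<odot> cl_hat A"
    by (simp add: clm.add_right cl_assoc)
  also have "\<dots> = (2*t) *\<^sub>R ((b \<odot> a) \<odot> A) - (2*t) *\<^sub>R ((a \<odot> b) \<odot> cl_hat A)"
    unfolding h1 h2 by (simp add: clm.scaleR_left clm.minus_left)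
  finally have X: "cl_e lastidx \<odot> (?U + cl_hat ?U) = (2*t) *\<^sub>R ((b \<odot> a) \<odot> A) - (2*t) *\<^sub>R ((a \<odot> b) \<odot> cl_hat A)" .
  have e1: "cl_e lastidx \<odot> ?U + cl_Q' ?U = t *\<^sub>R ((b \<odot> a) \<odot> A) - t *\<^sub>R ((a \<odot> b) \<odot> cl_hat A)"
    unfolding en_Q' X by (simp add: algebra_simps)
  have e2: "(a + b) \<odot> ?U = (-(1/R)) *\<^sub>R A - (a \<odot> b) \<odot> cl_hat A + (b \<odot> a) \<odot> A + (1/S) *\<^sub>R cl_hat A"
  proof -
    have "(a + b) \<odot> ?U = (a \<odot> a) \<odot> A - (a \<odot> b) \<odot> cl_hat A + (b \<odot> a) \<odot> A - (b \<odot> b) \<odot> cl_hat A"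
      by (simp only: clm.add_left clm.diff_right cl_assoc) (simp add: algebra_simps)
    then show ?thesis unfolding h3 h4 clm.scaleR_left cl_one_left by (simp add: algebra_simps)
  qed
  show ?thesis unfolding e1 e2 by (simp add: algebra_simps)
qed

lemma hd_normdiff:
  fixes y c :: "'a::real_inner"
  assumes "y \<noteq> c"
  shows "((\<lambda>y. norm (y - c)) has_derivative (\<lambda>h. ((y - c) \<bullet> h) / norm (y - c))) (at y)"
proof -
  have n: "(norm has_derivative (\<lambda>h. h \<bullet> sgn (y - c))) (at (y - c))"
    using has_derivative_norm[of "y - c"] assms by simp
  have d: "((\<lambda>y. y - c) has_derivative (\<lambda>h. h)) (at y)"
    by (auto intro!: derivative_eq_intros)
  have "((\<lambda>y. norm (y - c)) has_derivative (\<lambda>h. h \<bullet> sgn (y - c))) (at y)"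
    using has_derivative_compose[OF d n] by simp
  moreover have "(\<lambda>h. h \<bullet> sgn (y - c)) = (\<lambda>h. ((y - c) \<bullet> h) / norm (y - c))"
    by (rule ext) (simp add: sgn_div_norm inner_commute divide_inverse mult.commute del: scaleR_diff_right)
  ultimately show ?thesis by simp
qed

lemma hd_nth: "((\<lambda>y. y $ i) has_derivative (\<lambda>h. h $ i)) (at (y::real^'n))"
  using bounded_linear_imp_has_derivative[OF bounded_linear_vec_nth] .

lemma hd_phi:
  fixes y c1 c2 :: "real ^ 'n::{finite,linorder}" and m :: nat
  assumes t: "y $ i \<noteq> 0" and y1: "y \<noteq> c1" and y2: "y \<noteq> c2"
  shows "((\<lambda>y. (y $ i) ^ m / (norm (y - c1) ^ m * norm (y - c2) ^ m)) has_derivative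
    (\<lambda>h. ((y $ i) ^ m / (norm (y - c1) ^ m * norm (y - c2) ^ m)) * real m *
        (h $ i / y $ i - ((y - c1) \<bullet> h) / ((y - c1) \<bullet> (y - c1)) - ((y - c2) \<bullet> h) / ((y - c2) \<bullet> (y - c2))))) (at y)"
proof -
  have n1: "norm (y - c1) \<noteq> 0" and n2: "norm (y - c2) \<noteq> 0" using y1 y2 by auto
  have i1: "(y - c1) \<bullet> (y - c1) = norm (y - c1) ^ 2" and i2: "(y - c2) \<bullet> (y - c2) = norm (y - c2) ^ 2"
    by (simp_all add: power2_norm_eq_inner)
  show ?thesis
  proof (cases m)
    case 0
    then show ?thesis by simp
  next
    case (Suc k)
    show ?thesis
      apply (rule has_derivative_eq_rhs)
       apply (rule has_derivative_divide has_derivative_power has_derivative_mult hd_nth hd_normdiff y1 y2)+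
      using t n1 n2 apply (simp add: Suc)
      unfolding Suc i1 i2
      using t n1 n2 apply (intro ext)
      apply (simp add: field_simps power2_eq_square)
      done
  qed
qed

definition av :: "real ^ 'n \<Rightarrow> real ^ 'n \<Rightarrow> real ^ 'n" where
  "av y c = (1 / ((y - c) \<bullet> (y - c))) *\<^sub>R (y - c)"

definition dav :: "real ^ 'n \<Rightarrow> real ^ 'n \<Rightarrow> real ^ 'n \<Rightarrow> real ^ 'n" where
  "dav y c h = (1 / ((y - c) \<bullet> (y - c))) *\<^sub>R h - (2 * ((y - c) \<bullet> h) / ((y - c) \<bullet> (y - c))^2) *\<^sub>R (y - c)"

lemma hd_av:
  fixes y c :: "real ^ 'n::{finite,linorder}"
  assumes "y \<noteq> c"
  shows "((\<lambda>y. cl_vec (av y c)) has_derivative (\<lambda>h. cl_vec (dav y c h))) (at y)"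
proof -
  have nz: "(y - c) \<bullet> (y - c) \<noteq> 0" using assms by simp
  have d1: "((\<lambda>y. y - c) has_derivative (\<lambda>h. h)) (at y)"
    using has_derivative_diff[OF has_derivative_ident has_derivative_const[of c]] by simp
  have d2: "((\<lambda>y. (y - c) \<bullet> (y - c)) has_derivative (\<lambda>h. (y - c) \<bullet> h + h \<bullet> (y - c))) (at y)"
    using has_derivative_inner[OF d1 d1] .
  have d3: "((\<lambda>y. 1 / ((y - c) \<bullet> (y - c))) has_derivative
      (\<lambda>h. - 1 * (inverse ((y - c) \<bullet> (y - c)) * ((y - c) \<bullet> h + h \<bullet> (y - c)) * inverse ((y - c) \<bullet> (y - c))) + 0 / ((y - c) \<bullet> (y - c)))) (at y)"
    using has_derivative_divide[OF has_derivative_const[of 1] d2 nz] by simp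
  have d4: "((\<lambda>y. av y c) has_derivative (\<lambda>h. (1 / ((y - c) \<bullet> (y - c))) *\<^sub>R h +
      (- 1 * (inverse ((y - c) \<bullet> (y - c)) * ((y - c) \<bullet> h + h \<bullet> (y - c)) * inverse ((y - c) \<bullet> (y - c))) + 0 / ((y - c) \<bullet> (y - c))) *\<^sub>R (y - c))) (at y)"
    unfolding av_def using has_derivative_scaleR[OF d3 d1] .
  have e: "(\<lambda>h. (1 / ((y - c) \<bullet> (y - c))) *\<^sub>R h +
      (- 1 * (inverse ((y - c) \<bullet> (y - c)) * ((y - c) \<bullet> h + h \<bullet> (y - c)) * inverse ((y - c) \<bullet> (y - c))) + 0 / ((y - c) \<bullet> (y - c))) *\<^sub>R (y - c))
     = dav y c"
  proof -
    have aux: "(1 / q) *\<^sub>R h + (- 1 * (inverse q * (z \<bullet> h + h \<bullet> z) * inverse q) + 0 / q) *\<^sub>R z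
      = (1 / q) *\<^sub>R h - (2 * (z \<bullet> h) / q^2) *\<^sub>R z" for q :: real and z h :: "real ^ 'n::{finite,linorder}"
    proof -
      have "- 1 * (inverse q * (z \<bullet> h + h \<bullet> z) * inverse q) + 0 / q = - (2 * (z \<bullet> h) / q^2)"
        by (simp add: inner_commute power2_eq_square divide_inverse)
      then show ?thesis by simp
    qed
    show ?thesis unfolding dav_def aux ..
  qed
  have "((\<lambda>y. av y c) has_derivative dav y c) (at y)" using d4 unfolding e .
  then show ?thesis using bounded_linear.has_derivative[OF cl_vec_linear] by blast
qed

lemma ee: "cl_e j \<odot> cl_e j = - cl1"
  unfolding cl_e_vec vp_sq by (simp add: inner_axis_axis)

lemma dirac_av:
  fixes y c :: "real ^ 'n::{finite,linorder}"
  assumes "y \<noteq> c"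
  shows "(\<Sum>j\<in>UNIV. cl_e j \<odot> cl_vec (dav y c (axis j 1))) = (- ((real CARD('n) - 2) / ((y - c) \<bullet> (y - c)))) *\<^sub>R cl1"
proof -
  define z where "z = y - c"
  define R where "R = z \<bullet> z"
  have R0: "R \<noteq> 0" using assms unfolding R_def z_def by simp
  have "(\<Sum>j\<in>UNIV. cl_e j \<odot> cl_vec (dav y c (axis j 1))) =
     (\<Sum>j\<in>UNIV. (1/R) *\<^sub>R (cl_e j \<odot> cl_e j) - (2 / R^2) *\<^sub>R (z $ j *\<^sub>R cl_e j \<odot> cl_vec z))"
    unfolding dav_def z_def[symmetric] R_def[symmetric]
    by (intro sum.cong refl) (simp add: clv_diff clv_scaleR clm.diff_right clm.scaleR_right clm.scaleR_left
         cl_e_vec[symmetric] inner_axis)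
  also have "\<dots> = (1/R) *\<^sub>R (\<Sum>j\<in>(UNIV::'n set). - cl1) - (2 / R^2) *\<^sub>R ((\<Sum>j\<in>UNIV. z $ j *\<^sub>R cl_e j) \<odot> cl_vec z)"
    unfolding ee by (simp add: sum_subtractf scaleR_sum_right clm.sum_left)
  also have "\<dots> = (- ((real CARD('n) - 2) / R)) *\<^sub>R cl1"
  proof -
    have s1: "(\<Sum>j\<in>(UNIV::'n set). - cl1) = - (real CARD('n) *\<^sub>R (cl1::'n cl))"
      by (simp only: sum_negf sum_constant_scaleR)
    have "(1/R) *\<^sub>R (- (real CARD('n) *\<^sub>R (cl1::'n cl))) - (2 / R^2) *\<^sub>R ((- R) *\<^sub>R cl1)
        = (- (real CARD('n) / R) + 2 * R / R^2) *\<^sub>R cl1"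
      by (simp add: algebra_simps)
    also have "- (real CARD('n) / R) + 2 * R / R^2 = - ((real CARD('n) - 2) / R)"
      using R0 by (simp add: power2_eq_square field_simps)
    finally show ?thesis unfolding cl_vec_sum[symmetric] vp_sq R_def[symmetric] s1 .
  qed
  finally show ?thesis unfolding R_def z_def .
qed

definition phi :: "real ^ ('n::{finite,linorder}) \<Rightarrow> real ^ ('n::{finite,linorder}) \<Rightarrow> real" where
  "phi x y = (y $ lastidx) ^ (CARD('n) - 2) / (norm (y - x) ^ (CARD('n) - 2) * norm (y - vhat x) ^ (CARD('n) - 2))"

definition dphi :: "real ^ ('n::{finite,linorder}) \<Rightarrow> real ^ ('n::{finite,linorder}) \<Rightarrow> real ^ ('n::{finite,linorder}) \<Rightarrow> real" where
  "dphi x y h = phi x y * real (CARD('n) - 2) *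
     (h $ lastidx / y $ lastidx - ((y - x) \<bullet> h) / ((y - x) \<bullet> (y - x)) - ((y - vhat x) \<bullet> h) / ((y - vhat x) \<bullet> (y - vhat x)))"

definition Uf :: "real ^ ('n::{finite,linorder}) \<Rightarrow> ('n::{finite,linorder}) cl \<Rightarrow> real ^ ('n::{finite,linorder}) \<Rightarrow> ('n::{finite,linorder}) cl" where
  "Uf x A y = cl_vec (av y x) \<odot> A - cl_vec (av y (vhat x)) \<odot> cl_hat A"

definition dUf :: "real ^ ('n::{finite,linorder}) \<Rightarrow> ('n::{finite,linorder}) cl \<Rightarrow> real ^ ('n::{finite,linorder}) \<Rightarrow> real ^ ('n::{finite,linorder}) \<Rightarrow> ('n::{finite,linorder}) cl" where
  "dUf x A y h = cl_vec (dav y x h) \<odot> A - cl_vec (dav y (vhat x) h) \<odot> cl_hat A"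

definition Gf :: "real ^ ('n::{finite,linorder}) \<Rightarrow> ('n::{finite,linorder}) cl \<Rightarrow> real ^ ('n::{finite,linorder}) \<Rightarrow> ('n::{finite,linorder}) cl" where
  "Gf x A y = phi x y *\<^sub>R Uf x A y"

definition DGf :: "real ^ ('n::{finite,linorder}) \<Rightarrow> ('n::{finite,linorder}) cl \<Rightarrow> real ^ ('n::{finite,linorder}) \<Rightarrow> real ^ ('n::{finite,linorder}) \<Rightarrow> ('n::{finite,linorder}) cl" where
  "DGf x A y h = phi x y *\<^sub>R dUf x A y h + dphi x y h *\<^sub>R Uf x A y"

lemma hd_U:
  assumes "y \<noteq> x" "y \<noteq> vhat x"
  shows "(Uf x A has_derivative dUf x A y) (at y)"
proof -
  have "((\<lambda>y. cl_vec (av y x) \<odot> A - cl_vec (av y (vhat x)) \<odot> cl_hat A) has_derivative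
     (\<lambda>h. (cl_vec (av y x) \<odot> 0 + cl_vec (dav y x h) \<odot> A) - (cl_vec (av y (vhat x)) \<odot> 0 + cl_vec (dav y (vhat x) h) \<odot> cl_hat A))) (at y)"
    by (intro has_derivative_diff clm.FDERIV hd_av assms has_derivative_const)
  then show ?thesis unfolding Uf_def dUf_def by (simp add: clm.zero_right)
qed

lemma hd_phi':
  assumes "y $ lastidx \<noteq> 0" "y \<noteq> x" "y \<noteq> vhat x"
  shows "(phi x has_derivative dphi x y) (at y)"
  using hd_phi[OF assms, of "CARD('n) - 2"] unfolding phi_def[abs_def] dphi_def[abs_def] by simp

lemma hd_G:
  assumes "y $ lastidx \<noteq> 0" "y \<noteq> x" "y \<noteq> vhat x"
  shows "(Gf x A has_derivative DGf x A y) (at y)"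
proof -
  have "((\<lambda>y. phi x y *\<^sub>R Uf x A y) has_derivative (\<lambda>h. phi x y *\<^sub>R dUf x A y h + dphi x y h *\<^sub>R Uf x A y)) (at y)"
    by (rule has_derivative_scaleR[OF hd_phi'[OF assms] hd_U[OF assms(2,3)]])
  then show ?thesis unfolding Gf_def[abs_def] DGf_def[abs_def] .
qed

lemma sum_axis_vec: "(\<Sum>j\<in>UNIV. f j *\<^sub>R cl_e j) = cl_vec (\<chi> j. f j)"
  unfolding cl_vec_def by simp

lemma G_dirac:
  fixes x y :: "real ^ ('n::{finite,linorder})" and A :: "('n::{finite,linorder}) cl"
  assumes N: "CARD('n) > 2" and tpos: "y $ lastidx > 0" and yx: "y \<noteq> x" and yv: "y \<noteq> vhat x"
  shows "(\<Sum>j\<in>UNIV. cl_e j \<odot> DGf x A y (axis j 1)) + ((real CARD('n) - 2) / (y $ lastidx)) *\<^sub>R cl_Q' (Gf x A y) = 0"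
proof -
  define w where "w = y - x"
  define v where "v = y - vhat x"
  define t where "t = y $ lastidx"
  define R where "R = w \<bullet> w"
  define S where "S = v \<bullet> v"
  define a where "a = cl_vec ((1/R) *\<^sub>R w)"
  define b where "b = cl_vec ((1/S) *\<^sub>R v)"
  define U where "U = a \<odot> A - b \<odot> cl_hat A"
  define ph where "ph = phi x y"
  define mr where "mr = real CARD('n) - 2"
  have hv: "\<And>i. i \<noteq> lastidx \<Longrightarrow> v$i = w$i" unfolding v_def w_def vhat_def by simp
  have ht: "v$lastidx + w$lastidx = 2*t" unfolding v_def w_def vhat_def t_def by simp
  have hR: "w \<bullet> w \<noteq> 0" using yx unfolding w_def by simp
  have hS: "v \<bullet> v \<noteq> 0" using yv unfolding v_def by simp
  have t0: "t \<noteq> 0" using tpos unfolding t_def by simp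
  have mr: "real (CARD('n) - 2) = mr" unfolding mr_def using N by (simp add: of_nat_diff)
  have Ueq: "Uf x A y = U" unfolding Uf_def U_def a_def b_def av_def w_def v_def R_def S_def ..
  have P1: "(\<Sum>j\<in>UNIV. cl_e j \<odot> dUf x A y (axis j 1)) = (-(mr/R)) *\<^sub>R A + (mr/S) *\<^sub>R cl_hat A"
  proof -
    have "(\<Sum>j\<in>UNIV. cl_e j \<odot> dUf x A y (axis j 1)) =
      (\<Sum>j\<in>UNIV. cl_e j \<odot> cl_vec (dav y x (axis j 1))) \<odot> A - (\<Sum>j\<in>UNIV. cl_e j \<odot> cl_vec (dav y (vhat x) (axis j 1))) \<odot> cl_hat A"
      unfolding dUf_def clm.diff_right clm.sum_left cl_assoc sum_subtractf ..
    then show ?thesis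
      unfolding dirac_av[OF yx] dirac_av[OF yv] clm.scaleR_left cl_one_left
      by (simp add: mr_def R_def S_def w_def v_def)
  qed
  have P2: "(\<Sum>j\<in>UNIV. dphi x y (axis j 1) *\<^sub>R (cl_e j \<odot> U)) = (ph * mr) *\<^sub>R (((1/t) *\<^sub>R cl_e lastidx - a - b) \<odot> U)"
  proof -
    have "(\<Sum>j\<in>UNIV. dphi x y (axis j 1) *\<^sub>R (cl_e j \<odot> U)) = cl_vec (\<chi> j. dphi x y (axis j 1)) \<odot> U"
      unfolding sum_axis_vec[symmetric] clm.sum_left clm.scaleR_left ..
    also have "(\<chi> j. dphi x y (axis j 1)) = (ph * mr) *\<^sub>R ((1/t) *\<^sub>R axis lastidx 1 - (1/R) *\<^sub>R w - (1/S) *\<^sub>R v)"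
    proof -
      have d: "dphi x y h = ph * mr * (h $ lastidx / t - (w \<bullet> h) / R - (v \<bullet> h) / S)" for h
        unfolding dphi_def mr ph_def t_def R_def S_def w_def v_def ..
      have ax: "axis i (1::real) $ j = (if j = i then 1 else 0)" for i j :: 'n by (simp add: axis_def)
      show ?thesis unfolding vec_eq_iff d by (simp add: inner_axis ax algebra_simps)
    qed
    finally show ?thesis
      unfolding a_def b_def cl_e_vec clv_diff clv_scaleR by (simp add: clm.scaleR_left)
  qed
  have core: "cl_e lastidx \<odot> U + cl_Q' U - t *\<^sub>R ((a + b) \<odot> U) - (t/R) *\<^sub>R A + (t/S) *\<^sub>R cl_hat A = 0"
    unfolding U_def a_def b_def R_def S_def
    by (rule core_abstract[OF vp1[OF hv ht hR hS] vp2[OF hv ht hR hS] sq_a[OF hv ht hR hS] sq_b[OF hv ht hR hS]])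
  have Q'G: "cl_Q' (Gf x A y) = ph *\<^sub>R cl_Q' U"
    unfolding Gf_def Ueq ph_def using bounded_linear.linear[OF Q'_linear] by (rule linear_scale)
  have "(\<Sum>j\<in>UNIV. cl_e j \<odot> DGf x A y (axis j 1)) =
      ph *\<^sub>R (\<Sum>j\<in>UNIV. cl_e j \<odot> dUf x A y (axis j 1)) + (\<Sum>j\<in>UNIV. dphi x y (axis j 1) *\<^sub>R (cl_e j \<odot> U))"
    unfolding DGf_def clm.add_right clm.scaleR_right sum.distrib scaleR_sum_right Ueq ph_def ..
  also have "\<dots> = ph *\<^sub>R ((-(mr/R)) *\<^sub>R A + (mr/S) *\<^sub>R cl_hat A) + (ph * mr) *\<^sub>R (((1/t) *\<^sub>R cl_e lastidx - a - b) \<odot> U)"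
    unfolding P1 P2 ..
  finally have L: "(\<Sum>j\<in>UNIV. cl_e j \<odot> DGf x A y (axis j 1)) = \<dots>" .
  have "(\<Sum>j\<in>UNIV. cl_e j \<odot> DGf x A y (axis j 1)) + ((real CARD('n) - 2) / (y $ lastidx)) *\<^sub>R cl_Q' (Gf x A y)
     = (ph * mr / t) *\<^sub>R (cl_e lastidx \<odot> U + cl_Q' U - t *\<^sub>R ((a + b) \<odot> U) - (t/R) *\<^sub>R A + (t/S) *\<^sub>R cl_hat A)"
    unfolding L Q'G mr_def[symmetric] t_def[symmetric] using t0
    by (simp add: clm.diff_left clm.add_left clm.scaleR_left algebra_simps)
  also have "\<dots> = 0" unfolding core by simp
  finally show ?thesis .
qed

lemma set_int_cont:
  fixes f :: "'a::euclidean_space \<Rightarrow> 'c::euclidean_space"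
  assumes "compact C" "K \<subseteq> C" "K \<in> sets lborel" "continuous_on C f"
  shows "set_integrable lborel K f"
proof -
  have "set_integrable lborel C f"
    unfolding set_integrable_def using borel_integrable_compact[OF assms(1,4)] .
  then show ?thesis using set_integrable_subset assms(2,3) by blast
qed

lemma set_int_norm_le:
  fixes f :: "'a::euclidean_space \<Rightarrow> 'c::euclidean_space"
  assumes "set_integrable lborel K f" "K \<in> sets lborel" "emeasure lborel K < \<infinity>"
    and "\<And>x. x \<in> K \<Longrightarrow> norm (f x) \<le> B"
  shows "norm (LINT x:K|lborel. f x) \<le> B * measure lborel K"
proof -
  have i1: "integrable lborel (\<lambda>x. indicator K x *\<^sub>R f x)" using assms(1) unfolding set_integrable_def .
  have i2: "integrable lborel (\<lambda>x. B * indicator K x)"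
    using assms(2,3) by (intro integrable_mult_right integrable_real_indicator) auto
  have "norm (LINT x:K|lborel. f x) \<le> integral\<^sup>L lborel (\<lambda>x. norm (indicator K x *\<^sub>R f x))"
    unfolding set_lebesgue_integral_def by (rule integral_norm_bound)
  also have "\<dots> \<le> integral\<^sup>L lborel (\<lambda>x. B * indicator K x)"
    using integrable_norm[OF i1] i2 assms(4) by (intro integral_mono) (auto simp: indicator_def)
  also have "\<dots> = B * measure lborel K"
    using assms(2,3) by simp
  finally show ?thesis .
qed


lemma cont_slice:
  fixes G :: "'a::euclidean_space \<Rightarrow> 'b::euclidean_space \<Rightarrow> 'c::euclidean_space"
  assumes "continuous_on (C \<times> S) (\<lambda>(x,y). G x y)" "y \<in> S"
  shows "continuous_on C (\<lambda>x. G x y)"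
proof -
  have "continuous_on C (\<lambda>x. (\<lambda>(x,y). G x y) (x, y))"
    by (rule continuous_on_compose2[OF assms(1)]) (use assms(2) in \<open>auto intro!: continuous_intros\<close>)
  then show ?thesis by simp
qed

lemma param_cont:
  fixes G :: "'a::euclidean_space \<Rightarrow> 'b::euclidean_space \<Rightarrow> 'c::euclidean_space"
  assumes C: "compact C" and KC: "K \<subseteq> C" and Kb: "K \<in> sets lborel" and S: "open S"
    and cont: "continuous_on (C \<times> S) (\<lambda>(x,y). G x y)"
  shows "continuous_on S (\<lambda>y. LINT x:K|lborel. G x y)"
  unfolding continuous_on_iff
proof (intro ballI allI impI)
  fix y0 :: 'b and e :: real
  assume y0: "y0 \<in> S" and e: "0 < e"
  obtain r where r: "r > 0" "cball y0 r \<subseteq> S" using S y0 open_contains_cball by blast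
  define T where "T = C \<times> cball y0 r"
  have cT: "compact T" unfolding T_def using C by (simp add: compact_Times)
  have contT: "continuous_on T (\<lambda>(x,y). G x y)"
    using continuous_on_subset[OF cont, of "C \<times> cball y0 r"] r(2) unfolding T_def by (meson Sigma_mono order_refl)
  have uc: "uniformly_continuous_on T (\<lambda>(x,y). G x y)"
    using compact_uniformly_continuous[OF contT cT] .
  have finK: "emeasure lborel K < \<infinity>"
    using emeasure_bounded_finite bounded_subset[OF compact_imp_bounded[OF C] KC] by blast
  define M where "M = measure lborel K"
  have M0: "M \<ge> 0" unfolding M_def by simp
  define e' where "e' = e / (M + 1)"
  have e': "e' > 0" unfolding e'_def using e M0 by simp
  obtain d where d: "d > 0" "\<And>p p'. p \<in> T \<Longrightarrow> p' \<in> T \<Longrightarrow> dist p' p < d \<Longrightarrow>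
      dist ((\<lambda>(x,y). G x y) p') ((\<lambda>(x,y). G x y) p) < e'"
    using uc e' unfolding uniformly_continuous_on_def by metis
  show "\<exists>d>0. \<forall>y\<in>S. dist y y0 < d \<longrightarrow> dist (LINT x:K|lborel. G x y) (LINT x:K|lborel. G x y0) < e"
  proof (intro exI[of _ "min r d"] conjI ballI impI)
    show "min r d > 0" using r d by simp
    fix y assume yS: "y \<in> S" and dy: "dist y y0 < min r d"
    have i1: "set_integrable lborel K (\<lambda>x. G x y)"
      by (rule set_int_cont[OF C KC Kb cont_slice[OF cont yS]])
    have i2: "set_integrable lborel K (\<lambda>x. G x y0)"
      by (rule set_int_cont[OF C KC Kb cont_slice[OF cont y0]])
    have bnd: "norm (G x y - G x y0) \<le> e'" if "x \<in> K" for x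
    proof -
      have "x \<in> C" using that KC by auto
      then have "(x, y) \<in> T" "(x, y0) \<in> T" unfolding T_def using dy r
        by (auto simp: dist_commute)
      moreover have "dist (x, y) (x, y0) < d" using dy by (simp add: dist_Pair_Pair)
      ultimately have "dist (G x y) (G x y0) < e'" using d(2)[of "(x, y0)" "(x, y)"] by simp
      then show ?thesis by (simp add: dist_norm)
    qed
    have "dist (LINT x:K|lborel. G x y) (LINT x:K|lborel. G x y0) = norm (LINT x:K|lborel. G x y - G x y0)"
      unfolding dist_norm using set_integral_diff(2)[OF i1 i2] by simp
    also have "\<dots> \<le> e' * M"
      unfolding M_def by (rule set_int_norm_le[OF set_integral_diff(1)[OF i1 i2] Kb finK bnd])
    also have "\<dots> < e"
    proof -
      have "e' * M = e * (M / (M + 1))" unfolding e'_def by simp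
      also have "\<dots> < e * 1" using e M0 by (intro mult_strict_left_mono) auto
      finally show ?thesis by simp
    qed
    finally show "dist (LINT x:K|lborel. G x y) (LINT x:K|lborel. G x y0) < e" .
  qed
qed


lemma mvt_line:
  fixes g :: "real \<Rightarrow> 'c::real_normed_vector"
  assumes der: "\<And>\<sigma>. \<bar>\<sigma>\<bar> \<le> \<bar>s\<bar> \<Longrightarrow> (g has_derivative (\<lambda>h. h *\<^sub>R D \<sigma>)) (at \<sigma>)"
    and bnd: "\<And>\<sigma>. \<bar>\<sigma>\<bar> \<le> \<bar>s\<bar> \<Longrightarrow> norm (D \<sigma> - D 0) \<le> B"
  shows "norm (g s - g 0 - s *\<^sub>R D 0) \<le> \<bar>s\<bar> * B"
proof -
  define I where "I = {-\<bar>s\<bar> .. \<bar>s\<bar>}"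
  have "norm (g s - g 0 - (s - 0) *\<^sub>R D 0) \<le> norm (s - 0) * B"
  proof (rule differentiable_bound_linearization[where S=I and f'="\<lambda>\<sigma> h. h *\<^sub>R D \<sigma>"])
    show "0 + t *\<^sub>R (s - 0) \<in> I" if "t \<in> {0..1}" for t
    proof -
      have t: "0 \<le> t" "t \<le> 1" using that by auto
      have "\<bar>t * s\<bar> = t * \<bar>s\<bar>" using t by (simp add: abs_mult)
      also have "\<dots> \<le> \<bar>s\<bar>" using t by (intro mult_left_le_one_le) auto
      finally show ?thesis unfolding I_def by (simp add: abs_le_iff)
    qed
    show "((g has_derivative (\<lambda>h. h *\<^sub>R D x)) (at x within I))" if "x \<in> I" for x
      using der[of x] that unfolding I_def by (auto intro: has_derivative_at_withinI)
    show "onorm ((\<lambda>h. h *\<^sub>R D x) - (\<lambda>h. h *\<^sub>R D 0)) \<le> B" if "x \<in> I" for x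
    proof -
      have "(\<lambda>h. h *\<^sub>R D x) - (\<lambda>h. h *\<^sub>R D 0) = (\<lambda>h. h *\<^sub>R (D x - D 0))"
        by (auto simp: fun_eq_iff algebra_simps)
      then show ?thesis using bnd[of x] that onorm_scaleR_left[OF bounded_linear_ident, of "D x - D 0"]
        unfolding I_def by (simp add: onorm_id abs_le_iff)
    qed
    show "0 \<in> I" unfolding I_def by simp
  qed
  then show ?thesis by simp
qed


lemma param_deriv:
  fixes G :: "'a::euclidean_space \<Rightarrow> 'b::euclidean_space \<Rightarrow> 'c::euclidean_space"
    and DG :: "'a \<Rightarrow> 'b \<Rightarrow> 'b \<Rightarrow> 'c"
  assumes C: "compact C" and KC: "K \<subseteq> C" and Kb: "K \<in> sets lborel" and S: "open S"
    and cont: "continuous_on (C \<times> S) (\<lambda>(x,y). G x y)"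
    and der: "\<And>x y. x \<in> C \<Longrightarrow> y \<in> S \<Longrightarrow> (G x has_derivative DG x y) (at y)"
    and contD: "continuous_on (C \<times> S) (\<lambda>(x,y). DG x y e)"
    and y: "y \<in> S"
  shows "((\<lambda>s. LINT x:K|lborel. G x (y + s *\<^sub>R e)) has_vector_derivative (LINT x:K|lborel. DG x y e)) (at 0)"
  unfolding has_vector_derivative_def has_derivative_at_alt
proof (intro conjI allI impI)
  show "bounded_linear (\<lambda>h. h *\<^sub>R (LINT x:K|lborel. DG x y e))"
    by (rule bounded_linear_scaleR_left)
  fix \<epsilon> :: real assume \<epsilon>: "\<epsilon> > 0"
  obtain r where r: "r > 0" "cball y r \<subseteq> S" using S y open_contains_cball by blast
  define T where "T = C \<times> cball y r"
  have cT: "compact T" unfolding T_def using C by (simp add: compact_Times)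
  have contT: "continuous_on T (\<lambda>(x,z). DG x z e)"
    using continuous_on_subset[OF contD, of "C \<times> cball y r"] r(2) unfolding T_def by (meson Sigma_mono order_refl)
  have uc: "uniformly_continuous_on T (\<lambda>(x,z). DG x z e)"
    using compact_uniformly_continuous[OF contT cT] .
  have finK: "emeasure lborel K < \<infinity>"
    using emeasure_bounded_finite bounded_subset[OF compact_imp_bounded[OF C] KC] by blast
  define M where "M = measure lborel K"
  have M0: "M \<ge> 0" unfolding M_def by simp
  define e' where "e' = \<epsilon> / (M + 1)"
  have e': "e' > 0" unfolding e'_def using \<epsilon> M0 by simp
  obtain d where d: "d > 0" "\<And>p p'. p \<in> T \<Longrightarrow> p' \<in> T \<Longrightarrow> dist p' p < d \<Longrightarrow>
      dist ((\<lambda>(x,z). DG x z e) p') ((\<lambda>(x,z). DG x z e) p) < e'"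
    using uc e' unfolding uniformly_continuous_on_def by metis
  define \<delta> where "\<delta> = min r d / (norm e + 1)"
  have \<delta>: "\<delta> > 0" unfolding \<delta>_def using r(1) d(1) by (intro divide_pos_pos) (auto intro: add_nonneg_pos)
  show "\<exists>\<delta>>0. \<forall>s. norm (s - 0) < \<delta> \<longrightarrow>
    norm ((LINT x:K|lborel. G x (y + s *\<^sub>R e)) - (LINT x:K|lborel. G x (y + 0 *\<^sub>R e)) - (s - 0) *\<^sub>R (LINT x:K|lborel. DG x y e))
      \<le> \<epsilon> * norm (s - 0)"
  proof (intro exI[of _ \<delta>] conjI allI impI)
    show "\<delta> > 0" by (rule \<delta>)
    fix s :: real assume "norm (s - 0) < \<delta>"
    then have sd: "\<bar>s\<bar> < \<delta>" by simp
    have small: "norm (\<sigma> *\<^sub>R e) < min r d" if "\<bar>\<sigma>\<bar> \<le> \<bar>s\<bar>" for \<sigma>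
    proof -
      have "norm (\<sigma> *\<^sub>R e) = \<bar>\<sigma>\<bar> * norm e" by simp
      also have "\<dots> \<le> \<bar>s\<bar> * norm e" using that by (intro mult_right_mono) auto
      also have "\<dots> \<le> \<delta> * norm e" using sd by (intro mult_right_mono) auto
      also have "\<dots> < \<delta> * (norm e + 1)" using \<delta> by simp
      also have "\<dots> = min r d"
      proof -
        have "norm e + 1 \<noteq> 0" by (metis add_nonneg_pos norm_ge_zero zero_less_one less_irrefl)
        then show ?thesis unfolding \<delta>_def by simp
      qed
      finally show ?thesis .
    qed
    have inS: "y + \<sigma> *\<^sub>R e \<in> cball y r" if "\<bar>\<sigma>\<bar> \<le> \<bar>s\<bar>" for \<sigma>
      using small[OF that] by (simp add: dist_norm)
    have ys: "y + s *\<^sub>R e \<in> S" using inS[of s] r(2) by auto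
    have i1: "set_integrable lborel K (\<lambda>x. G x (y + s *\<^sub>R e))"
      by (rule set_int_cont[OF C KC Kb cont_slice[OF cont ys]])
    have i2: "set_integrable lborel K (\<lambda>x. G x y)"
      by (rule set_int_cont[OF C KC Kb cont_slice[OF cont y]])
    have i3: "set_integrable lborel K (\<lambda>x. s *\<^sub>R DG x y e)"
      using set_int_cont[OF C KC Kb cont_slice[OF contD y]] by simp
    have pt: "norm (G x (y + s *\<^sub>R e) - G x y - s *\<^sub>R DG x y e) \<le> \<bar>s\<bar> * e'" if xK: "x \<in> K" for x
    proof -
      have xC: "x \<in> C" using xK KC by auto
      define g where "g \<sigma> = G x (y + \<sigma> *\<^sub>R e)" for \<sigma>
      define D where "D \<sigma> = DG x (y + \<sigma> *\<^sub>R e) e" for \<sigma>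
      have "norm (g s - g 0 - s *\<^sub>R D 0) \<le> \<bar>s\<bar> * e'"
      proof (rule mvt_line)
        fix \<sigma> :: real assume \<sigma>: "\<bar>\<sigma>\<bar> \<le> \<bar>s\<bar>"
        have zS: "y + \<sigma> *\<^sub>R e \<in> S" using inS[OF \<sigma>] r(2) by auto
        have l: "((\<lambda>\<sigma>. y + \<sigma> *\<^sub>R e) has_derivative (\<lambda>h. h *\<^sub>R e)) (at \<sigma>)"
          by (auto intro!: derivative_eq_intros)
        have dG: "(G x has_derivative DG x (y + \<sigma> *\<^sub>R e)) (at (y + \<sigma> *\<^sub>R e))"
          using der[OF xC zS] .
        have "(g has_derivative (\<lambda>h. DG x (y + \<sigma> *\<^sub>R e) (h *\<^sub>R e))) (at \<sigma>)"
          unfolding g_def using has_derivative_compose[OF l dG] by simp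
        moreover have "(\<lambda>h. DG x (y + \<sigma> *\<^sub>R e) (h *\<^sub>R e)) = (\<lambda>h. h *\<^sub>R D \<sigma>)"
          unfolding D_def using linear_scale[OF bounded_linear.linear[OF has_derivative_bounded_linear[OF dG]]]
          by auto
        ultimately show "(g has_derivative (\<lambda>h. h *\<^sub>R D \<sigma>)) (at \<sigma>)" by simp
        have "(x, y + \<sigma> *\<^sub>R e) \<in> T" "(x, y) \<in> T" unfolding T_def using xC inS[OF \<sigma>] r by auto
        moreover have "dist (x, y + \<sigma> *\<^sub>R e) (x, y) < d"
          using small[OF \<sigma>] by (simp add: dist_Pair_Pair dist_norm)
        ultimately have "dist (D \<sigma>) (D 0) < e'" unfolding D_def using d(2)[of "(x, y)" "(x, y + \<sigma> *\<^sub>R e)"] by simp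
        then show "norm (D \<sigma> - D 0) \<le> e'" by (simp add: dist_norm)
      qed
      then show ?thesis unfolding g_def D_def by simp
    qed
    have "norm ((LINT x:K|lborel. G x (y + s *\<^sub>R e)) - (LINT x:K|lborel. G x (y + 0 *\<^sub>R e)) - (s - 0) *\<^sub>R (LINT x:K|lborel. DG x y e))
       = norm (LINT x:K|lborel. G x (y + s *\<^sub>R e) - G x y - s *\<^sub>R DG x y e)"
      using set_integral_diff(2)[OF set_integral_diff(1)[OF i1 i2] i3] set_integral_diff(2)[OF i1 i2] by simp
    also have "\<dots> \<le> (\<bar>s\<bar> * e') * M"
      unfolding M_def by (rule set_int_norm_le[OF set_integral_diff(1)[OF set_integral_diff(1)[OF i1 i2] i3] Kb finK pt])
    also have "\<dots> \<le> \<epsilon> * norm (s - 0)"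
    proof -
      have "e' * M \<le> \<epsilon>"
      proof -
        have "e' * M = \<epsilon> * (M / (M + 1))" unfolding e'_def by simp
        also have "\<dots> \<le> \<epsilon> * 1" using \<epsilon> M0 by (intro mult_left_mono) auto
        finally show ?thesis by simp
      qed
      then have "\<bar>s\<bar> * (e' * M) \<le> \<bar>s\<bar> * \<epsilon>" by (intro mult_left_mono) auto
      then show ?thesis by (simp add: mult_ac)
    qed
    finally show "norm ((LINT x:K|lborel. G x (y + s *\<^sub>R e)) - (LINT x:K|lborel. G x (y + 0 *\<^sub>R e)) - (s - 0) *\<^sub>R (LINT x:K|lborel. DG x y e))
      \<le> \<epsilon> * norm (s - 0)" .
  qed
qed

lemma vhat_linear: "bounded_linear (vhat :: real ^ ('n::{finite,linorder}) \<Rightarrow> _)"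
proof -
  have "linear (vhat :: real ^ ('n::{finite,linorder}) \<Rightarrow> _)"
    unfolding linear_iff vhat_def by (auto simp: vec_eq_iff)
  then show ?thesis using linear_conv_bounded_linear by blast
qed

lemma vhat_vhat[simp]: "vhat (vhat z) = z" unfolding vhat_def by (simp add: vec_eq_iff)
lemma vhat_diff: "vhat (a - b) = vhat a - vhat b" unfolding vhat_def by (simp add: vec_eq_iff)
lemma norm_vhat[simp]: "norm (vhat z) = norm z"
  unfolding norm_eq_sqrt_inner inner_vec_def vhat_def
  by (simp, intro arg_cong[where f=sqrt] sum.cong refl) auto

lemma cont_fst_comp:
  assumes "continuous_on C f"
  shows "continuous_on (C \<times> S) (\<lambda>p. f (fst p))"
  by (rule continuous_on_compose2[OF assms continuous_on_fst[OF continuous_on_id]]) auto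

lemma cont_G:
  fixes L :: "real ^ ('n::{finite,linorder}) \<Rightarrow> ('n::{finite,linorder}) cl"
  assumes L: "continuous_on C L"
    and ne: "\<And>x y. x \<in> C \<Longrightarrow> y \<in> S \<Longrightarrow> y \<noteq> x \<and> y \<noteq> vhat x \<and> y $ lastidx \<noteq> 0"
  shows "continuous_on (C \<times> S) (\<lambda>(x,y). Gf x (L x) y)"
proof -
  have e: "(\<lambda>(x,y). Gf x (L x) y) = (\<lambda>p. Gf (fst p) (L (fst p)) (snd p))" by auto
  have Lc: "continuous_on (C \<times> S) (\<lambda>p. L (fst p))" by (rule cont_fst_comp[OF L])
  have Lh: "continuous_on (C \<times> S) (\<lambda>p. cl_hat (L (fst p)))"
    by (rule bounded_linear.continuous_on[OF hat_linear Lc])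
  have vh: "continuous_on (C \<times> S) (\<lambda>p. vhat (fst p))"
    by (rule bounded_linear.continuous_on[OF vhat_linear continuous_on_fst[OF continuous_on_id]])
  have nz: "\<forall>p\<in>C \<times> S. snd p - fst p \<noteq> 0 \<and> snd p - vhat (fst p) \<noteq> 0" using ne by auto
  show ?thesis unfolding case_prod_unfold Gf_def phi_def Uf_def av_def
    apply (intro continuous_intros clm.continuous_on bounded_linear.continuous_on[OF cl_vec_linear] Lc Lh vh)
    using nz by auto
qed

lemma cont_DG:
  fixes L :: "real ^ ('n::{finite,linorder}) \<Rightarrow> ('n::{finite,linorder}) cl"
  assumes L: "continuous_on C L"
    and ne: "\<And>x y. x \<in> C \<Longrightarrow> y \<in> S \<Longrightarrow> y \<noteq> x \<and> y \<noteq> vhat x \<and> y $ lastidx \<noteq> 0"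
  shows "continuous_on (C \<times> S) (\<lambda>(x,y). DGf x (L x) y h)"
proof -
  have Lc: "continuous_on (C \<times> S) (\<lambda>p. L (fst p))" by (rule cont_fst_comp[OF L])
  have Lh: "continuous_on (C \<times> S) (\<lambda>p. cl_hat (L (fst p)))"
    by (rule bounded_linear.continuous_on[OF hat_linear Lc])
  have vh: "continuous_on (C \<times> S) (\<lambda>p. vhat (fst p))"
    by (rule bounded_linear.continuous_on[OF vhat_linear continuous_on_fst[OF continuous_on_id]])
  have nz: "\<forall>p\<in>C \<times> S. snd p - fst p \<noteq> 0 \<and> snd p - vhat (fst p) \<noteq> 0 \<and> snd p $ lastidx \<noteq> 0" using ne by auto
  show ?thesis unfolding case_prod_unfold DGf_def phi_def dphi_def Uf_def dUf_def av_def dav_def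
    apply (intro continuous_intros clm.continuous_on bounded_linear.continuous_on[OF cl_vec_linear] Lc Lh vh)
    using nz by auto
qed

lemma integrand_eq:
  fixes x y :: "real ^ ('n::{finite,linorder})"
  shows "(y $ lastidx) ^ (CARD('n) - 2) *\<^sub>R (kerE x y \<odot> A - kerF x y \<odot> cl_hat A) = Gf x A y"
proof -
  have n1: "norm (x - y) = norm (y - x)" by (rule norm_minus_commute)
  have n2: "norm (x - vhat y) = norm (y - vhat x)"
  proof -
    have "x - vhat y = vhat (vhat x - y)" by (simp add: vhat_diff)
    then have "norm (x - vhat y) = norm (vhat x - y)" by simp
    then show ?thesis by (simp add: norm_minus_commute)
  qed
  have n3: "norm (vhat x - y) = norm (y - vhat x)" by (rule norm_minus_commute)
  have v1: "cl_vinv (x - y) = cl_vec (av y x)"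
    unfolding cl_vinv_def av_def
    by (rule arg_cong[where f=cl_vec]) (simp add: power2_norm_eq_inner inner_commute algebra_simps
       flip: norm_minus_commute[of x y])
  have v2: "cl_vinv (vhat x - y) = cl_vec (av y (vhat x))"
    unfolding cl_vinv_def av_def
    by (rule arg_cong[where f=cl_vec]) (simp add: power2_norm_eq_inner inner_commute algebra_simps
       flip: norm_minus_commute[of "vhat x" y])
  show ?thesis
    unfolding kerE_def kerF_def n1 n2 n3 v1 v2 Gf_def phi_def Uf_def clm.scaleR_left
    by (simp add: algebra_simps)
qed

lemma set_integral_bl:
  fixes f :: "'a \<Rightarrow> 'c::euclidean_space" and T :: "'c \<Rightarrow> 'd::euclidean_space"
  assumes T: "bounded_linear T" and f: "set_integrable M K f"
  shows "(LINT x:K|M. T (f x)) = T (LINT x:K|M. f x)"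
proof -
  have e: "(\<lambda>x. indicator K x *\<^sub>R T (f x)) = (\<lambda>x. T (indicator K x *\<^sub>R f x))"
    by (simp add: linear_scale[OF bounded_linear.linear[OF T]])
  show ?thesis unfolding set_lebesgue_integral_def e
    using integral_bounded_linear[OF T f[unfolded set_integrable_def]] .
qed

lemma set_integrable_bl:
  fixes f :: "'a \<Rightarrow> 'c::euclidean_space" and T :: "'c \<Rightarrow> 'd::euclidean_space"
  assumes T: "bounded_linear T" and f: "set_integrable M K f"
  shows "set_integrable M K (\<lambda>x. T (f x))"
proof -
  have e: "(\<lambda>x. indicator K x *\<^sub>R T (f x)) = (\<lambda>x. T (indicator K x *\<^sub>R f x))"
    by (simp add: linear_scale[OF bounded_linear.linear[OF T]])
  show ?thesis unfolding set_integrable_def e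
    using integrable_bounded_linear[OF T f[unfolded set_integrable_def]] .
qed

lemma set_integral_sum':
  fixes f :: "'i \<Rightarrow> 'a \<Rightarrow> 'c::euclidean_space"
  assumes "\<And>i. i \<in> I \<Longrightarrow> set_integrable M K (f i)"
  shows "(LINT x:K|M. (\<Sum>i\<in>I. f i x)) = (\<Sum>i\<in>I. LINT x:K|M. f i x)"
    and "set_integrable M K (\<lambda>x. \<Sum>i\<in>I. f i x)"
  using assms unfolding set_lebesgue_integral_def set_integrable_def
  by (simp_all add: scaleR_sum_right integral_sum)


theorem theorem13:
  fixes K :: "(real ^ ('n::{finite,linorder})) set"
    and L :: "real ^ ('n::{finite,linorder}) \<Rightarrow> 'n cl"
  assumes "CARD('n) > 2"
    and "open K" and "connected K" and "K \<noteq> {}" and "bounded K"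
    and "smooth_boundary K"
    and "closure K \<subseteq> upper_half"
    and "C1_closure K L"
  shows "hypermonogenic_on (upper_half - closure K)
           (\<lambda>y. (y $ lastidx) ^ (CARD('n) - 2) *\<^sub>R
                ((LINT x:K|lborel. kerE x y \<odot> L x) - (LINT x:K|lborel. kerF x y \<odot> cl_hat (L x))))"
proof -
  note N = assms(1)
  define S where "S = upper_half - closure K"
  define C where "C = closure K"
  define I where "I = (\<lambda>y. (y $ lastidx) ^ (CARD('n) - 2) *\<^sub>R
                ((LINT x:K|lborel. kerE x y \<odot> L x) - (LINT x:K|lborel. kerF x y \<odot> cl_hat (L x))))"
  define G where "G x y = Gf x (L x) y" for x y
  define DG where "DG x y = DGf x (L x) y" for x y
  have cC: "compact C" unfolding C_def using assms(5) by (simp add: compact_closure)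
  have KC: "K \<subseteq> C" unfolding C_def by (rule closure_subset)
  have Kb: "K \<in> sets lborel" using assms(2) by simp
  have oU: "open (upper_half :: (real ^ ('n::{finite,linorder})) set)"
    unfolding upper_half_def
    by (rule open_Collect_less) (auto intro: continuous_intros linear_continuous_on bounded_linear_vec_nth)
  have oS: "open S" unfolding S_def using oU by auto
  have LC: "continuous_on C L" using assms(8) unfolding C1_closure_def C_def by simp
  have ne: "y \<noteq> x \<and> y \<noteq> vhat x \<and> y $ lastidx \<noteq> 0" if "x \<in> C" "y \<in> S" for x y
  proof -
    have "x $ lastidx > 0" using that(1) assms(7) unfolding C_def upper_half_def by auto
    moreover have "y $ lastidx > 0" "y \<notin> C" using that(2) unfolding S_def upper_half_def C_def by auto
    ultimately show ?thesis using that(1) by (auto simp: vhat_def)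
  qed
  have ypos: "y $ lastidx > 0" if "y \<in> S" for y using that unfolding S_def upper_half_def by auto
  have contG: "continuous_on (C \<times> S) (\<lambda>(x,y). G x y)"
    unfolding G_def by (rule cont_G[OF LC ne]) auto
  have contDG: "continuous_on (C \<times> S) (\<lambda>(x,y). DG x y h)" for h
    unfolding DG_def by (rule cont_DG[OF LC ne]) auto
  have derG: "(G x has_derivative DG x y) (at y)" if "x \<in> C" "y \<in> S" for x y
    unfolding G_def[abs_def] DG_def using hd_G ne[OF that] by auto
  have Ieq: "I y = (LINT x:K|lborel. G x y)" if y: "y \<in> S" for y
  proof -
    have ne2: "x - y \<noteq> 0 \<and> x - vhat y \<noteq> 0 \<and> vhat x - y \<noteq> 0" if "x \<in> C" for x
    proof -
      have "x $ lastidx > 0" using that assms(7) unfolding C_def upper_half_def by auto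
      then show ?thesis using ne[OF that y] ypos[OF y] by (auto simp: vhat_def)
    qed
    have c1: "continuous_on C (\<lambda>x. kerE x y \<odot> L x)"
      unfolding kerE_def cl_vinv_def
      apply (intro continuous_intros clm.continuous_on bounded_linear.continuous_on[OF cl_vec_linear]
          bounded_linear.continuous_on[OF vhat_linear] LC)
      using ne2 by auto
    have c2: "continuous_on C (\<lambda>x. kerF x y \<odot> cl_hat (L x))"
      unfolding kerF_def cl_vinv_def
      apply (intro continuous_intros clm.continuous_on bounded_linear.continuous_on[OF cl_vec_linear]
          bounded_linear.continuous_on[OF vhat_linear] bounded_linear.continuous_on[OF hat_linear] LC)
      using ne2 by auto
    have i1: "set_integrable lborel K (\<lambda>x. kerE x y \<odot> L x)" by (rule set_int_cont[OF cC KC Kb c1])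
    have i2: "set_integrable lborel K (\<lambda>x. kerF x y \<odot> cl_hat (L x))" by (rule set_int_cont[OF cC KC Kb c2])
    have "I y = (LINT x:K|lborel. (y $ lastidx) ^ (CARD('n) - 2) *\<^sub>R (kerE x y \<odot> L x - kerF x y \<odot> cl_hat (L x)))"
      unfolding I_def set_integral_scaleR_right set_integral_diff(2)[OF i1 i2] ..
    also have "\<dots> = (LINT x:K|lborel. G x y)"
      unfolding G_def integrand_eq ..
    finally show ?thesis .
  qed
  have pd: "((\<lambda>t. I (y + t *\<^sub>R axis j 1)) has_vector_derivative (LINT x:K|lborel. DG x y (axis j 1))) (at 0)"
    if y: "y \<in> S" for y j
  proof -
    have HD: "((\<lambda>s. LINT x:K|lborel. G x (y + s *\<^sub>R axis j 1)) has_vector_derivative (LINT x:K|lborel. DG x y (axis j 1))) (at 0)"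
      by (rule param_deriv[OF cC KC Kb oS contG derG contDG y])
    define Os where "Os = (\<lambda>s::real. y + s *\<^sub>R axis j 1) -` S"
    have oO: "open Os" unfolding Os_def
      by (rule continuous_open_vimage[OF oS]) (auto intro: continuous_intros)
    have O0: "0 \<in> Os" unfolding Os_def using y by simp
    show ?thesis
      by (rule has_vector_derivative_transform_within_open[OF HD oO O0]) (simp add: Os_def Ieq)
  qed
  have pdiff_eq: "pdiff j I y = (LINT x:K|lborel. DG x y (axis j 1))" if "y \<in> S" for y j
    unfolding pdiff_def using vector_derivative_at[OF pd[OF that]] .
  have C1: "Ck_on 1 S I"
  proof -
    have "continuous_on S I"
      using param_cont[OF cC KC Kb oS contG] by (rule continuous_on_cong[THEN iffD1, rotated 2]) (simp_all add: Ieq)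
    moreover have "has_partials_on I S"
      unfolding has_partials_on_def using pd differentiableI_vector by blast
    moreover have "continuous_on S (pdiff j I)" for j
      using param_cont[OF cC KC Kb oS contDG[of "axis j 1"]]
      by (rule continuous_on_cong[THEN iffD1, rotated 2]) (simp_all add: pdiff_eq)
    ultimately show ?thesis by simp
  qed
  have DH0: "DH I y = 0" if y: "y \<in> S" for y
  proof -
    define c where "c = (real CARD('n) - 2) / (y $ lastidx)"
    have iG: "set_integrable lborel K (\<lambda>x. G x y)"
      by (rule set_int_cont[OF cC KC Kb cont_slice[OF contG y]])
    have iD: "set_integrable lborel K (\<lambda>x. DG x y (axis j 1))" for j
      by (rule set_int_cont[OF cC KC Kb cont_slice[OF contDG y]])
    have iD': "set_integrable lborel K (\<lambda>x. cl_e j \<odot> DG x y (axis j 1))" for j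
      by (rule set_integrable_bl[OF clm.bounded_linear_right iD])
    have bQ: "bounded_linear (\<lambda>v. c *\<^sub>R cl_Q' v)"
      by (rule bounded_linear_compose[OF bounded_linear_scaleR_right Q'_linear])
    have "DH I y = (\<Sum>j\<in>UNIV. cl_e j \<odot> (LINT x:K|lborel. DG x y (axis j 1))) + c *\<^sub>R cl_Q' (LINT x:K|lborel. G x y)"
      unfolding DH_def c_def using pdiff_eq[OF y] Ieq[OF y] by simp
    also have "\<dots> = (\<Sum>j\<in>UNIV. LINT x:K|lborel. cl_e j \<odot> DG x y (axis j 1)) + (LINT x:K|lborel. c *\<^sub>R cl_Q' (G x y))"
      using set_integral_bl[OF clm.bounded_linear_right iD] set_integral_bl[OF bQ iG] by (simp, metis)
    also have "\<dots> = (LINT x:K|lborel. (\<Sum>j\<in>UNIV. cl_e j \<odot> DG x y (axis j 1)) + c *\<^sub>R cl_Q' (G x y))"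
      using set_integral_sum'[of UNIV lborel K "\<lambda>j x. cl_e j \<odot> DG x y (axis j 1)", OF iD']
        set_integral_add(2)[OF set_integral_sum'(2)[of UNIV lborel K "\<lambda>j x. cl_e j \<odot> DG x y (axis j 1)", OF iD']
          set_integrable_bl[OF bQ iG]]
      by simp
    also have "\<dots> = (LINT x:K|lborel. 0)"
    proof (rule set_lebesgue_integral_cong)
      show "K \<in> sets lborel" by (rule Kb)
      show "\<forall>x. x \<in> K \<longrightarrow> (\<Sum>j\<in>UNIV. cl_e j \<odot> DG x y (axis j 1)) + c *\<^sub>R cl_Q' (G x y) = 0"
      proof (intro allI impI)
        fix x assume "x \<in> K"
        then have xC: "x \<in> C" using KC by auto
        show "(\<Sum>j\<in>UNIV. cl_e j \<odot> DG x y (axis j 1)) + c *\<^sub>R cl_Q' (G x y) = 0"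
          unfolding DG_def G_def c_def using G_dirac[OF N ypos[OF y]] ne[OF xC y] by auto
      qed
    qed
    also have "\<dots> = 0" by simp
    finally show ?thesis .
  qed
  show ?thesis
    unfolding hypermonogenic_on_def S_def[symmetric] I_def[symmetric] using C1 DH0 by blast
qed

end
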